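(* Let $X,Y,Z$ be countable discrete metric spaces of bounded geometry, $d_{XY}\in D(X,Y)$, $d_{YZ}\in D(Y,Z)$. Then $M_{d_{XY}}(X,Y)\hat\otimes M_{d_{YZ}}(Y,Z)=M_{d_{YZ}\circ d_{XY}}(X,Z)$.
   Context: A discrete metric space $X$ has bounded geometry if for every $R>0$ the cardinalities $|B_R(x)|$ of balls of radius $R$ are finite and bounded uniformly in $x\in X$. $H_X=l^2(X)$ with basis $\{\delta_x\}$; for $T:H_X\to H_Y$ bounded, $T_{yx}=\langle T\delta_x,\delta_y\rangle$; $T$ has propagation less than $L$ w.r.t. $\rho$ if $T_{yx}=0$ whenever $\rho(x,y)\ge L$. $M_\rho(X,Y)$ is the norm closure in $\mathbb B(H_X,H_Y)$ of bounded operators of finite propagation w.r.t. $\rho$. $D(X,Y)$ is the set of metrics on $X\sqcup Y$ restricting to $d_X,d_Y$. $(d_{YZ}\circ d_{XY})$ is the metric on $X\sqcup Z$ equal to $d_X$, $d_Z$ on $X$, $Z$ and $(d_{YZ}\circ d_{XY})(x,z)=\inf_{y\in Y}(d_{XY}(x,y)+d_{YZ}(y,z))$. For closed subspaces $M\subset\mathbb B(H_X,H_Y)$, $N\subset\mathbb B(H_Y,H_Z)$, $M\hat\otimes N$ denotes the norm closure in $\mathbb B(H_X,H_Z)$ of the linear span of all $S\circ T$ with $T\in M$, $S\in N$. *)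

theory Defs
  imports "HOL-Analysis.Analysis"
begin

definition is_metric :: "('a \<Rightarrow> 'a \<Rightarrow> real) \<Rightarrow> bool" where
  "is_metric d \<longleftrightarrow>
     (\<forall>x y. 0 \<le> d x y) \<and> (\<forall>x y. d x y = 0 \<longleftrightarrow> x = y) \<and>
     (\<forall>x y. d x y = d y x) \<and> (\<forall>x y z. d x z \<le> d x y + d y z)"

definition bounded_geometry :: "('a \<Rightarrow> 'a \<Rightarrow> real) \<Rightarrow> bool" where
  "bounded_geometry d \<longleftrightarrow> is_metric d \<and>
     (\<forall>R>0. \<exists>N::nat. \<forall>x. finite {y. d x y \<le> R} \<and> card {y. d x y \<le> R} \<le> N)"

definition Dmetrics :: "('a \<Rightarrow> 'a \<Rightarrow> real) \<Rightarrow> ('b \<Rightarrow> 'b \<Rightarrow> real)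
    \<Rightarrow> (('a + 'b) \<Rightarrow> ('a + 'b) \<Rightarrow> real) set" where
  "Dmetrics dX dY = {\<rho>. is_metric \<rho> \<and> (\<forall>a b. \<rho> (Inl a) (Inl b) = dX a b)
                                    \<and> (\<forall>a b. \<rho> (Inr a) (Inr b) = dY a b)}"

definition metric_comp :: "(('x + 'y) \<Rightarrow> ('x + 'y) \<Rightarrow> real) \<Rightarrow> (('y + 'z) \<Rightarrow> ('y + 'z) \<Rightarrow> real)
    \<Rightarrow> ('x + 'z) \<Rightarrow> ('x + 'z) \<Rightarrow> real" where
  "metric_comp dXY dYZ p q =
     (case p of
        Inl x \<Rightarrow> (case q of
                    Inl x' \<Rightarrow> dXY (Inl x) (Inl x')
                  | Inr z \<Rightarrow> (INF y. dXY (Inl x) (Inr y) + dYZ (Inl y) (Inr z)))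
      | Inr z \<Rightarrow> (case q of
                    Inl x \<Rightarrow> (INF y. dXY (Inl x) (Inr y) + dYZ (Inl y) (Inr z))
                  | Inr z' \<Rightarrow> dYZ (Inr z) (Inr z')))"

definition l2 :: "('a \<Rightarrow> complex) set" where
  "l2 = {f. (\<lambda>x. (cmod (f x))^2) summable_on UNIV}"

definition l2norm :: "('a \<Rightarrow> complex) \<Rightarrow> real" where
  "l2norm f = sqrt (\<Sum>\<^sub>\<infinity>x. (cmod (f x))^2)"

text \<open>Bounded linear operators l^2(X) \<rightarrow> l^2(Y), represented as functions that are
  linear and bounded on l^2 and (canonically) zero outside l^2.\<close>
definition bdd_op :: "(('a \<Rightarrow> complex) \<Rightarrow> ('b \<Rightarrow> complex)) set" where
  "bdd_op = {T. (\<forall>f\<in>l2. T f \<in> l2) \<and>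
     (\<forall>f\<in>l2. \<forall>g\<in>l2. \<forall>a b. T (\<lambda>x. a * f x + b * g x) = (\<lambda>y. a * T f y + b * T g y)) \<and>
     (\<exists>C. \<forall>f\<in>l2. l2norm (T f) \<le> C * l2norm f) \<and>
     (\<forall>f. f \<notin> l2 \<longrightarrow> T f = (\<lambda>_. 0))}"

definition opnorm :: "(('a \<Rightarrow> complex) \<Rightarrow> ('b \<Rightarrow> complex)) \<Rightarrow> real" where
  "opnorm T = Sup {l2norm (T f) | f. f \<in> l2 \<and> l2norm f \<le> 1}"

definition norm_closure :: "(('a \<Rightarrow> complex) \<Rightarrow> ('b \<Rightarrow> complex)) set
    \<Rightarrow> (('a \<Rightarrow> complex) \<Rightarrow> ('b \<Rightarrow> complex)) set" where
  "norm_closure A = {T \<in> bdd_op. \<forall>e>0. \<exists>S\<in>A. opnorm (\<lambda>f. T f - S f) < e}"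

definition delta :: "'a \<Rightarrow> 'a \<Rightarrow> complex" where
  "delta x = (\<lambda>x'. if x' = x then 1 else 0)"

definition entry :: "(('a \<Rightarrow> complex) \<Rightarrow> ('b \<Rightarrow> complex)) \<Rightarrow> 'b \<Rightarrow> 'a \<Rightarrow> complex" where
  "entry T y x = T (delta x) y"

definition finite_propagation :: "(('a + 'b) \<Rightarrow> ('a + 'b) \<Rightarrow> real)
    \<Rightarrow> (('a \<Rightarrow> complex) \<Rightarrow> ('b \<Rightarrow> complex)) \<Rightarrow> bool" where
  "finite_propagation \<rho> T \<longleftrightarrow> (\<exists>L. \<forall>x y. \<rho> (Inl x) (Inr y) \<ge> L \<longrightarrow> entry T y x = 0)"

definition Mprop :: "(('a + 'b) \<Rightarrow> ('a + 'b) \<Rightarrow> real)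
    \<Rightarrow> (('a \<Rightarrow> complex) \<Rightarrow> ('b \<Rightarrow> complex)) set" where
  "Mprop \<rho> = norm_closure {T \<in> bdd_op. finite_propagation \<rho> T}"

definition op_cspan :: "(('a \<Rightarrow> complex) \<Rightarrow> ('b \<Rightarrow> complex)) set
    \<Rightarrow> (('a \<Rightarrow> complex) \<Rightarrow> ('b \<Rightarrow> complex)) set" where
  "op_cspan A = {(\<lambda>f y. \<Sum>i<n. c i * G i f y) | (n::nat) c G. \<forall>i<n. G i \<in> A}"

definition op_tensor :: "(('a \<Rightarrow> complex) \<Rightarrow> ('b \<Rightarrow> complex)) set
    \<Rightarrow> (('b \<Rightarrow> complex) \<Rightarrow> ('c \<Rightarrow> complex)) set
    \<Rightarrow> (('a \<Rightarrow> complex) \<Rightarrow> ('c \<Rightarrow> complex)) set" where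
  "op_tensor M N = norm_closure (op_cspan {S \<circ> T | S T. T \<in> M \<and> S \<in> N})"

end

theory Submission
  imports Defs
begin

section \<open>l2 basics\<close>

lemma l2_summable: "f \<in> l2 \<Longrightarrow> (\<lambda>x. (cmod (f x))^2) summable_on UNIV"
  by (simp add: l2_def)

lemma l2_zero[simp]: "(\<lambda>_. 0) \<in> l2"
  by (simp add: l2_def)

lemma l2norm_zero[simp]: "l2norm (\<lambda>_. 0) = 0"
  by (simp add: l2norm_def)

lemma l2norm_nonneg: "0 \<le> l2norm f"
  unfolding l2norm_def by (simp add: infsum_nonneg)

lemma l2_finsum_le: "f \<in> l2 \<Longrightarrow> finite F \<Longrightarrow> (\<Sum>x\<in>F. (cmod (f x))^2) \<le> (\<Sum>\<^sub>\<infinity>x. (cmod (f x))^2)"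
  by (rule finite_sum_le_infsum) (auto simp: l2_def)

lemma l2_L2_set_le: "f \<in> l2 \<Longrightarrow> finite F \<Longrightarrow> L2_set (\<lambda>x. cmod (f x)) F \<le> l2norm f"
  unfolding L2_set_def l2norm_def by (rule real_sqrt_le_mono) (rule l2_finsum_le)

lemma l2norm_ge: "f \<in> l2 \<Longrightarrow> cmod (f x) \<le> l2norm f"
  using l2_L2_set_le[of f "{x}"] by simp

lemma l2_delta[simp]: "delta x \<in> l2"
proof -
  have "(\<lambda>y. (cmod (delta x y))^2) summable_on UNIV \<longleftrightarrow> (\<lambda>y. (cmod (delta x y))^2) summable_on {x}"
    by (rule summable_on_cong_neutral) (auto simp: delta_def)
  then show ?thesis by (simp add: l2_def)
qed

lemma l2_add: assumes "f \<in> l2" "g \<in> l2" shows "(\<lambda>x. f x + g x) \<in> l2"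
proof -
  have s: "(\<lambda>x. 2 * (cmod (f x))^2 + 2 * (cmod (g x))^2) summable_on UNIV"
    using assms by (intro summable_on_add summable_on_cmult_right) (auto simp: l2_def)
  have "(cmod (f x + g x))^2 \<le> 2 * (cmod (f x))^2 + 2 * (cmod (g x))^2" for x
  proof -
    have "(cmod (f x + g x))^2 \<le> (cmod (f x) + cmod (g x))^2"
      by (simp add: norm_triangle_ineq power_mono)
    also have "\<dots> \<le> 2 * (cmod (f x))^2 + 2 * (cmod (g x))^2"
    proof -
      have "0 \<le> (cmod (f x) - cmod (g x))^2" by simp
      then show ?thesis unfolding power2_diff power2_sum by linarith
    qed
    finally show ?thesis .
  qed
  then show ?thesis unfolding l2_def
    by (auto intro!: summable_on_comparison_test[OF s])
qed

lemma l2_scale: assumes "f \<in> l2" shows "(\<lambda>x. c * f x) \<in> l2"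
proof -
  have "(\<lambda>x. (cmod c)^2 * (cmod (f x))^2) summable_on UNIV"
    using assms by (intro summable_on_cmult_right) (auto simp: l2_def)
  then show ?thesis by (simp add: l2_def norm_mult power_mult_distrib)
qed

lemma l2_lin: "f \<in> l2 \<Longrightarrow> g \<in> l2 \<Longrightarrow> (\<lambda>x. a * f x + b * g x) \<in> l2"
  by (intro l2_add l2_scale)

lemma l2_diff: "f \<in> l2 \<Longrightarrow> g \<in> l2 \<Longrightarrow> (\<lambda>x. f x - g x) \<in> l2"
  using l2_lin[of f g 1 "-1"] by simp

lemma l2norm_triangle: assumes "f \<in> l2" "g \<in> l2"
  shows "l2norm (\<lambda>x. f x + g x) \<le> l2norm f + l2norm g"
proof -
  have "(\<Sum>\<^sub>\<infinity>x. (cmod (f x + g x))^2) \<le> (l2norm f + l2norm g)^2"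
  proof (rule infsum_le_finite_sums)
    show "(\<lambda>x. (cmod (f x + g x))^2) summable_on UNIV"
      using l2_add[OF assms] by (simp add: l2_def)
    fix F :: "'a set" assume F: "finite F"
    have "L2_set (\<lambda>x. cmod (f x + g x)) F \<le> L2_set (\<lambda>x. cmod (f x) + cmod (g x)) F"
      by (rule L2_set_mono) (auto simp: norm_triangle_ineq)
    also have "\<dots> \<le> L2_set (\<lambda>x. cmod (f x)) F + L2_set (\<lambda>x. cmod (g x)) F"
      by (rule L2_set_triangle_ineq)
    also have "\<dots> \<le> l2norm f + l2norm g"
      using l2_L2_set_le[OF assms(1) F] l2_L2_set_le[OF assms(2) F] by linarith
    finally have "sqrt (\<Sum>x\<in>F. (cmod (f x + g x))^2) \<le> l2norm f + l2norm g"
      by (simp add: L2_set_def)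
    moreover have S0: "0 \<le> (\<Sum>x\<in>F. (cmod (f x + g x))^2)" by (simp add: sum_nonneg)
    ultimately have "(sqrt (\<Sum>x\<in>F. (cmod (f x + g x))^2))^2 \<le> (l2norm f + l2norm g)^2"
      by (intro power_mono) auto
    then show "(\<Sum>x\<in>F. (cmod (f x + g x))^2) \<le> (l2norm f + l2norm g)^2"
      using S0 by simp
  qed
  then have "l2norm (\<lambda>x. f x + g x) \<le> sqrt ((l2norm f + l2norm g)^2)"
    unfolding l2norm_def[of "\<lambda>x. f x + g x"] by (rule real_sqrt_le_mono)
  also have "\<dots> = l2norm f + l2norm g"
    using l2norm_nonneg[of f] l2norm_nonneg[of g] by simp
  finally show ?thesis .
qed

lemma l2norm_scale: "l2norm (\<lambda>x. c * f x) = cmod c * l2norm f"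
proof -
  have "(\<Sum>\<^sub>\<infinity>x. (cmod (c * f x))^2) = (cmod c)^2 * (\<Sum>\<^sub>\<infinity>x. (cmod (f x))^2)"
    by (simp add: norm_mult power_mult_distrib infsum_cmult_right')
  then show ?thesis by (simp add: l2norm_def real_sqrt_mult)
qed

lemma l2_approx:
  assumes f: "f \<in> l2" and e: "e > 0"
  shows "\<exists>F. finite F \<and> l2norm (\<lambda>x. if x \<in> F then 0 else f x) < e"
proof -
  let ?h = "\<lambda>x. (cmod (f x))^2"
  have hs: "?h summable_on UNIV" using f by (simp add: l2_def)
  have e2: "e^2/2 > 0" using e by simp
  obtain F where F: "finite F" and d: "dist (sum ?h F) (infsum ?h UNIV) \<le> e^2/2"
    using infsum_finite_approximation[OF hs e2] by blast
  let ?t = "\<lambda>x. (cmod (if x \<in> F then 0 else f x))^2"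
  have ts: "?t summable_on UNIV"
    by (rule summable_on_comparison_test[OF hs]) auto
  have "infsum ?t UNIV \<le> e^2/2"
  proof (rule infsum_le_finite_sums[OF ts])
    fix G :: "'a set" assume G: "finite G"
    have "sum ?t G \<le> sum ?t (G \<union> F)"
      by (rule sum_mono2) (use G F in auto)
    also have "sum ?t (G \<union> F) + sum ?h F = sum ?h (G \<union> F)"
    proof -
      have "sum ?h (G \<union> F) = sum (\<lambda>x. ?t x + (if x \<in> F then ?h x else 0)) (G \<union> F)"
        by (rule sum.cong) auto
      also have "\<dots> = sum ?t (G \<union> F) + sum (\<lambda>x. if x \<in> F then ?h x else 0) (G \<union> F)"
        by (simp add: sum.distrib)
      also have "sum (\<lambda>x. if x \<in> F then ?h x else 0) (G \<union> F) = sum ?h ((G \<union> F) \<inter> F)"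
        by (simp add: sum.inter_restrict[symmetric] G F)
      also have "(G \<union> F) \<inter> F = F" by auto
      finally show ?thesis by simp
    qed
    moreover have "sum ?h (G \<union> F) \<le> infsum ?h UNIV"
      by (rule finite_sum_le_infsum[OF hs]) (use G F in auto)
    ultimately have "sum ?t G \<le> infsum ?h UNIV - sum ?h F" by linarith
    moreover have "infsum ?h UNIV - sum ?h F \<le> e^2/2"
      using d abs_ge_minus_self[of "sum ?h F - infsum ?h UNIV"] by (simp add: dist_real_def)
    ultimately show "sum ?t G \<le> e^2/2" by linarith
  qed
  hence "l2norm (\<lambda>x. if x \<in> F then 0 else f x) \<le> sqrt (e^2/2)"
    unfolding l2norm_def by (rule real_sqrt_le_mono)
  also have "sqrt (e^2/2) < sqrt (e^2)" using e by (intro real_sqrt_less_mono) simp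
  also have "\<dots> = e" using e by simp
  finally show ?thesis using F by blast
qed

section \<open>Bounded operators\<close>

lemma bdd_opD:
  assumes "T \<in> bdd_op"
  shows "\<And>f. f \<in> l2 \<Longrightarrow> T f \<in> l2"
    and "\<And>f g a b. f \<in> l2 \<Longrightarrow> g \<in> l2 \<Longrightarrow> T (\<lambda>x. a * f x + b * g x) = (\<lambda>y. a * T f y + b * T g y)"
    and "\<exists>C. \<forall>f\<in>l2. l2norm (T f) \<le> C * l2norm f"
    and "\<And>f. f \<notin> l2 \<Longrightarrow> T f = (\<lambda>_. 0)"
  using assms unfolding bdd_op_def by blast+

lemma bdd_opI:
  assumes "\<And>f. f \<in> l2 \<Longrightarrow> T f \<in> l2"
    and "\<And>f g a b. f \<in> l2 \<Longrightarrow> g \<in> l2 \<Longrightarrow> T (\<lambda>x. a * f x + b * g x) = (\<lambda>y. a * T f y + b * T g y)"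
    and "\<And>f. f \<in> l2 \<Longrightarrow> l2norm (T f) \<le> C * l2norm f"
    and "\<And>f. f \<notin> l2 \<Longrightarrow> T f = (\<lambda>_. 0)"
  shows "T \<in> bdd_op"
  using assms unfolding bdd_op_def by blast

lemma bdd_op_zero_arg: "T \<in> bdd_op \<Longrightarrow> T (\<lambda>_. 0) = (\<lambda>_. 0)"
  using bdd_opD(2)[of T "\<lambda>_. 0" "\<lambda>_. 0" 0 0] by simp

lemma bdd_op_scale_arg: "T \<in> bdd_op \<Longrightarrow> f \<in> l2 \<Longrightarrow> T (\<lambda>x. c * f x) = (\<lambda>y. c * T f y)"
  using bdd_opD(2)[of T f "\<lambda>_. 0" c 0] by (simp add: bdd_op_zero_arg)

lemma bdd_op_add_arg: "T \<in> bdd_op \<Longrightarrow> f \<in> l2 \<Longrightarrow> g \<in> l2 \<Longrightarrow> T (\<lambda>x. f x + g x) = (\<lambda>y. T f y + T g y)"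
  using bdd_opD(2)[of T f g 1 1] by simp

lemma bdd_op_diff_arg: "T \<in> bdd_op \<Longrightarrow> f \<in> l2 \<Longrightarrow> g \<in> l2 \<Longrightarrow> T (\<lambda>x. f x - g x) = (\<lambda>y. T f y - T g y)"
  using bdd_opD(2)[of T f g 1 "-1"] by simp

lemma l2_sum: "finite I \<Longrightarrow> (\<And>i. i \<in> I \<Longrightarrow> g i \<in> l2) \<Longrightarrow> (\<lambda>x. \<Sum>i\<in>I. c i * g i x) \<in> l2"
proof (induction I rule: finite_induct)
  case empty then show ?case by simp
next
  case (insert i I)
  then show ?case using l2_lin[of "g i" "\<lambda>x. \<Sum>i\<in>I. c i * g i x" "c i" 1] by simp
qed

lemma bdd_op_sum_arg:
  assumes T: "T \<in> bdd_op"
  shows "finite I \<Longrightarrow> (\<And>i. i \<in> I \<Longrightarrow> g i \<in> l2) \<Longrightarrow>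
     T (\<lambda>x. \<Sum>i\<in>I. c i * g i x) = (\<lambda>y. \<Sum>i\<in>I. c i * T (g i) y)"
proof (induction I rule: finite_induct)
  case empty then show ?case using bdd_op_zero_arg[OF T] by simp
next
  case (insert i I)
  have "T (\<lambda>x. \<Sum>i\<in>insert i I. c i * g i x) = T (\<lambda>x. c i * g i x + 1 * (\<Sum>i\<in>I. c i * g i x))"
    using insert by simp
  also have "\<dots> = (\<lambda>y. c i * T (g i) y + 1 * T (\<lambda>x. \<Sum>i\<in>I. c i * g i x) y)"
    by (rule bdd_opD(2)[OF T]) (use insert l2_sum[of I g c] in auto)
  finally show ?case using insert by simp
qed

lemma l2norm_zero_imp: "f \<in> l2 \<Longrightarrow> l2norm f = 0 \<Longrightarrow> f = (\<lambda>_. 0)"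
  using l2norm_ge[of f] by fastforce

lemma opnorm_set_bdd:
  assumes "T \<in> bdd_op"
  shows "bdd_above {l2norm (T f) | f. f \<in> l2 \<and> l2norm f \<le> 1}"
proof -
  obtain C where C: "\<forall>f\<in>l2. l2norm (T f) \<le> C * l2norm f" using bdd_opD(3)[OF assms] by blast
  have "l2norm (T f) \<le> max C 0" if "f \<in> l2" "l2norm f \<le> 1" for f
  proof -
    have "l2norm (T f) \<le> C * l2norm f" using C that by blast
    also have "\<dots> \<le> max C 0 * l2norm f" by (intro mult_right_mono) (auto simp: l2norm_nonneg)
    also have "\<dots> \<le> max C 0 * 1" by (intro mult_left_mono) (use that in auto)
    finally show ?thesis by simp
  qed
  then show ?thesis unfolding bdd_above_def by blast
qed

lemma opnorm_le:
  assumes "\<And>f. f \<in> l2 \<Longrightarrow> l2norm f \<le> 1 \<Longrightarrow> l2norm (T f) \<le> C"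
  shows "opnorm T \<le> C"
  unfolding opnorm_def
proof (rule cSup_least)
  have "l2norm (T (\<lambda>_. 0)) \<in> {l2norm (T f) |f. f \<in> l2 \<and> l2norm f \<le> 1}"
    by (intro CollectI exI[of _ "\<lambda>_. 0"]) simp
  then show "{l2norm (T f) |f. f \<in> l2 \<and> l2norm f \<le> 1} \<noteq> {}" by blast
qed (use assms in blast)

lemma opnorm_upper: "T \<in> bdd_op \<Longrightarrow> f \<in> l2 \<Longrightarrow> l2norm f \<le> 1 \<Longrightarrow> l2norm (T f) \<le> opnorm T"
  unfolding opnorm_def by (rule cSup_upper) (auto intro: opnorm_set_bdd)

lemma opnorm_nonneg: "T \<in> bdd_op \<Longrightarrow> 0 \<le> opnorm T"
  using opnorm_upper[of T "\<lambda>_. 0"] l2norm_nonneg[of "T (\<lambda>_. 0)"] by simp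

lemma opnorm_bound:
  assumes T: "T \<in> bdd_op" and f: "f \<in> l2"
  shows "l2norm (T f) \<le> opnorm T * l2norm f"
proof (cases "l2norm f = 0")
  case True
  then have "f = (\<lambda>_. 0)" using l2norm_zero_imp f by blast
  then show ?thesis using bdd_op_zero_arg[OF T] by simp
next
  case False
  define n where "n = l2norm f"
  have n: "n > 0" using False l2norm_nonneg[of f] n_def by simp
  let ?g = "\<lambda>x. complex_of_real (1/n) * f x"
  have g: "?g \<in> l2" using l2_scale[OF f] .
  have "l2norm ?g = cmod (complex_of_real (1/n)) * l2norm f" by (rule l2norm_scale)
  then have ng: "l2norm ?g = 1" using n by (simp add: n_def norm_divide)
  have "T ?g = (\<lambda>y. complex_of_real (1/n) * T f y)" by (rule bdd_op_scale_arg[OF T f])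
  then have "l2norm (T ?g) = cmod (complex_of_real (1/n)) * l2norm (T f)" by (simp only: l2norm_scale)
  then have "l2norm (T ?g) = (1/n) * l2norm (T f)" using n by (simp add: norm_divide)
  moreover have "l2norm (T ?g) \<le> opnorm T" using opnorm_upper[OF T g] ng by simp
  ultimately have "l2norm (T f) = n * l2norm (T ?g)" "l2norm (T ?g) \<le> opnorm T" using n by simp_all
  then have "l2norm (T f) \<le> n * opnorm T" using n by (simp add: mult_left_mono)
  then show ?thesis by (simp add: n_def mult.commute)
qed

lemma bdd_op_0: "(\<lambda>f. \<lambda>_. 0) \<in> bdd_op"
  by (rule bdd_opI[where C=0]) (auto simp: l2norm_nonneg)

lemma opnorm_0: "opnorm (\<lambda>f::'a \<Rightarrow> complex. \<lambda>_::'b. 0) = 0"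
  by (rule antisym[OF opnorm_le opnorm_nonneg[OF bdd_op_0]]) simp

lemma bdd_op_add:
  assumes A: "A \<in> bdd_op" and B: "B \<in> bdd_op"
  shows "(\<lambda>f y. A f y + B f y) \<in> bdd_op"
proof (rule bdd_opI[where C="opnorm A + opnorm B"])
  fix f :: "'a \<Rightarrow> complex" assume f: "f \<in> l2"
  show "(\<lambda>y. A f y + B f y) \<in> l2" by (rule l2_add) (use f bdd_opD(1)[OF A] bdd_opD(1)[OF B] in auto)
  have "l2norm (\<lambda>y. A f y + B f y) \<le> l2norm (A f) + l2norm (B f)"
    by (rule l2norm_triangle) (use f bdd_opD(1)[OF A] bdd_opD(1)[OF B] in auto)
  also have "\<dots> \<le> opnorm A * l2norm f + opnorm B * l2norm f"
    using opnorm_bound[OF A f] opnorm_bound[OF B f] by linarith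
  finally show "l2norm (\<lambda>y. A f y + B f y) \<le> (opnorm A + opnorm B) * l2norm f"
    by (simp add: algebra_simps)
next
  fix f g :: "'a \<Rightarrow> complex" and a b assume f: "f \<in> l2" and g: "g \<in> l2"
  show "(\<lambda>y. A (\<lambda>x. a * f x + b * g x) y + B (\<lambda>x. a * f x + b * g x) y) =
        (\<lambda>y. a * (A f y + B f y) + b * (A g y + B g y))"
    using bdd_opD(2)[OF A f g] bdd_opD(2)[OF B f g] by (simp add: algebra_simps)
next
  fix f :: "'a \<Rightarrow> complex" assume "f \<notin> l2"
  then show "(\<lambda>y. A f y + B f y) = (\<lambda>_. 0)" using bdd_opD(4)[OF A] bdd_opD(4)[OF B] by simp
qed

lemma opnorm_add:
  assumes A: "A \<in> bdd_op" and B: "B \<in> bdd_op"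
  shows "opnorm (\<lambda>f y. A f y + B f y) \<le> opnorm A + opnorm B"
proof (rule opnorm_le)
  fix f :: "'a \<Rightarrow> complex" assume f: "f \<in> l2" and n: "l2norm f \<le> 1"
  have "l2norm (\<lambda>y. A f y + B f y) \<le> l2norm (A f) + l2norm (B f)"
    by (rule l2norm_triangle) (use f bdd_opD(1)[OF A] bdd_opD(1)[OF B] in auto)
  also have "\<dots> \<le> opnorm A * l2norm f + opnorm B * l2norm f"
    using opnorm_bound[OF A f] opnorm_bound[OF B f] by linarith
  also have "\<dots> \<le> opnorm A * 1 + opnorm B * 1"
    using n opnorm_nonneg[OF A] opnorm_nonneg[OF B]
    by (intro add_mono mult_left_mono) auto
  finally show "l2norm (\<lambda>y. A f y + B f y) \<le> opnorm A + opnorm B" by simp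
qed

lemma bdd_op_scale:
  assumes A: "A \<in> bdd_op"
  shows "(\<lambda>f y. c * A f y) \<in> bdd_op"
proof (rule bdd_opI[where C="cmod c * opnorm A"])
  fix f :: "'a \<Rightarrow> complex" assume f: "f \<in> l2"
  show "(\<lambda>y. c * A f y) \<in> l2" by (rule l2_scale) (use f bdd_opD(1)[OF A] in auto)
  show "l2norm (\<lambda>y. c * A f y) \<le> (cmod c * opnorm A) * l2norm f"
    using opnorm_bound[OF A f] by (simp add: l2norm_scale mult.assoc mult_left_mono)
next
  fix f g :: "'a \<Rightarrow> complex" and a b assume f: "f \<in> l2" and g: "g \<in> l2"
  show "(\<lambda>y. c * A (\<lambda>x. a * f x + b * g x) y) = (\<lambda>y. a * (c * A f y) + b * (c * A g y))"
    using bdd_opD(2)[OF A f g] by (simp add: algebra_simps)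
next
  fix f :: "'a \<Rightarrow> complex" assume "f \<notin> l2"
  then show "(\<lambda>y. c * A f y) = (\<lambda>_. 0)" using bdd_opD(4)[OF A] by simp
qed

lemma opnorm_scale:
  assumes A: "A \<in> bdd_op"
  shows "opnorm (\<lambda>f y. c * A f y) \<le> cmod c * opnorm A"
proof (rule opnorm_le)
  fix f :: "'a \<Rightarrow> complex" assume f: "f \<in> l2" and n: "l2norm f \<le> 1"
  have "l2norm (\<lambda>y. c * A f y) = cmod c * l2norm (A f)" by (rule l2norm_scale)
  also have "\<dots> \<le> cmod c * (opnorm A * l2norm f)"
    using opnorm_bound[OF A f] by (simp add: mult_left_mono)
  also have "\<dots> \<le> cmod c * (opnorm A * 1)"
    using n opnorm_nonneg[OF A] by (intro mult_left_mono) auto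
  finally show "l2norm (\<lambda>y. c * A f y) \<le> cmod c * opnorm A" by simp
qed

lemma bdd_op_comp:
  assumes A: "A \<in> bdd_op" and B: "B \<in> bdd_op"
  shows "B \<circ> A \<in> bdd_op"
proof (rule bdd_opI[where C="opnorm B * opnorm A"])
  fix f :: "'a \<Rightarrow> complex" assume f: "f \<in> l2"
  have Af: "A f \<in> l2" using bdd_opD(1)[OF A f] .
  show "(B \<circ> A) f \<in> l2" using bdd_opD(1)[OF B Af] by simp
  have "l2norm (B (A f)) \<le> opnorm B * l2norm (A f)" by (rule opnorm_bound[OF B Af])
  also have "\<dots> \<le> opnorm B * (opnorm A * l2norm f)"
    using opnorm_bound[OF A f] opnorm_nonneg[OF B] by (simp add: mult_left_mono)
  finally show "l2norm ((B \<circ> A) f) \<le> (opnorm B * opnorm A) * l2norm f" by (simp add: mult.assoc)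
next
  fix f g :: "'a \<Rightarrow> complex" and a b assume f: "f \<in> l2" and g: "g \<in> l2"
  show "(B \<circ> A) (\<lambda>x. a * f x + b * g x) = (\<lambda>y. a * (B \<circ> A) f y + b * (B \<circ> A) g y)"
    using bdd_opD(2)[OF A f g] bdd_opD(2)[OF B bdd_opD(1)[OF A f] bdd_opD(1)[OF A g]] by simp
next
  fix f :: "'a \<Rightarrow> complex" assume "f \<notin> l2"
  then show "(B \<circ> A) f = (\<lambda>_. 0)" using bdd_opD(4)[OF A] bdd_op_zero_arg[OF B] by simp
qed

lemma opnorm_comp:
  assumes A: "A \<in> bdd_op" and B: "B \<in> bdd_op"
  shows "opnorm (B \<circ> A) \<le> opnorm B * opnorm A"
proof (rule opnorm_le)
  fix f :: "'a \<Rightarrow> complex" assume f: "f \<in> l2" and n: "l2norm f \<le> 1"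
  have Af: "A f \<in> l2" using bdd_opD(1)[OF A f] .
  have "l2norm (B (A f)) \<le> opnorm B * l2norm (A f)" by (rule opnorm_bound[OF B Af])
  also have "\<dots> \<le> opnorm B * (opnorm A * l2norm f)"
    using opnorm_bound[OF A f] opnorm_nonneg[OF B] by (simp add: mult_left_mono)
  also have "\<dots> \<le> opnorm B * (opnorm A * 1)"
    using n opnorm_nonneg[OF A] opnorm_nonneg[OF B] by (intro mult_left_mono) auto
  finally show "l2norm ((B \<circ> A) f) \<le> opnorm B * opnorm A" by simp
qed

lemma diff_as_add:
  fixes A B :: "('a \<Rightarrow> complex) \<Rightarrow> ('b \<Rightarrow> complex)"
  shows "(\<lambda>f. A f - B f) = (\<lambda>f y. A f y + (-1) * B f y)"
  by (auto simp: fun_eq_iff)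

lemma bdd_op_diff:
  assumes A: "A \<in> bdd_op" and B: "B \<in> bdd_op"
  shows "(\<lambda>f. A f - B f) \<in> bdd_op"
  unfolding diff_as_add by (rule bdd_op_add[OF A bdd_op_scale[OF B]])

lemma opnorm_tri:
  assumes A: "A \<in> bdd_op" and B: "B \<in> bdd_op" and C: "C \<in> bdd_op"
  shows "opnorm (\<lambda>f. A f - C f) \<le> opnorm (\<lambda>f. A f - B f) + opnorm (\<lambda>f. B f - C f)"
proof -
  have "(\<lambda>f. A f - C f) = (\<lambda>f y. (\<lambda>f. A f - B f) f y + (\<lambda>f. B f - C f) f y)"
    by (auto simp: fun_eq_iff)
  then show ?thesis using opnorm_add[OF bdd_op_diff[OF A B] bdd_op_diff[OF B C]] by simp
qed

lemma opnorm_sym: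
  assumes A: "A \<in> bdd_op" and B: "B \<in> bdd_op"
  shows "opnorm (\<lambda>f. A f - B f) \<le> opnorm (\<lambda>f. B f - A f)"
proof -
  have "(\<lambda>f. A f - B f) = (\<lambda>f y. (-1) * (\<lambda>f. B f - A f) f y)"
    by (auto simp: fun_eq_iff)
  then show ?thesis using opnorm_scale[OF bdd_op_diff[OF B A], of "-1"] by simp
qed

lemma opnorm_self:
  fixes A :: "('a \<Rightarrow> complex) \<Rightarrow> ('b \<Rightarrow> complex)"
  shows "opnorm (\<lambda>f. A f - A f) = 0"
proof -
  have "(\<lambda>f. A f - A f) = (\<lambda>f. \<lambda>_. 0)" by (auto simp: fun_eq_iff)
  then show ?thesis using opnorm_0 by simp
qed

section \<open>Norm closures\<close>

lemma closure_bdd: "norm_closure A \<subseteq> bdd_op"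
  unfolding norm_closure_def by auto

lemma closure_sub: "A \<subseteq> bdd_op \<Longrightarrow> A \<subseteq> norm_closure A"
proof
  fix T assume "A \<subseteq> bdd_op" "T \<in> A"
  then show "T \<in> norm_closure A" unfolding norm_closure_def
    using opnorm_self[of T] by (intro CollectI conjI allI impI bexI[of _ T]) auto
qed

lemma closureD: "T \<in> norm_closure A \<Longrightarrow> e > 0 \<Longrightarrow> \<exists>S\<in>A. opnorm (\<lambda>f. T f - S f) < e"
  unfolding norm_closure_def by blast

lemma closure_mono: "A \<subseteq> B \<Longrightarrow> norm_closure A \<subseteq> norm_closure B"
  unfolding norm_closure_def by blast

lemma closure_closure:
  assumes A: "A \<subseteq> bdd_op"
  shows "norm_closure (norm_closure A) \<subseteq> norm_closure A"
proof
  fix T assume T: "T \<in> norm_closure (norm_closure A)"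
  have Tb: "T \<in> bdd_op" using T closure_bdd by blast
  show "T \<in> norm_closure A" unfolding norm_closure_def
  proof (intro CollectI conjI allI impI Tb)
    fix e :: real assume e: "e > 0"
    obtain S where S: "S \<in> norm_closure A" "opnorm (\<lambda>f. T f - S f) < e/2"
      using closureD[OF T, of "e/2"] e by auto
    obtain R where R: "R \<in> A" "opnorm (\<lambda>f. S f - R f) < e/2"
      using closureD[OF S(1), of "e/2"] e by auto
    have "S \<in> bdd_op" using S(1) closure_bdd by blast
    moreover have "R \<in> bdd_op" using R(1) A by blast
    ultimately have "opnorm (\<lambda>f. T f - R f) \<le> opnorm (\<lambda>f. T f - S f) + opnorm (\<lambda>f. S f - R f)"
      using opnorm_tri[OF Tb] by blast
    then show "\<exists>R\<in>A. opnorm (\<lambda>f. T f - R f) < e" using S R by (intro bexI[of _ R]) auto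
  qed
qed

lemma closure_add:
  assumes A: "A \<subseteq> bdd_op" and cl: "\<And>S1 S2. S1 \<in> A \<Longrightarrow> S2 \<in> A \<Longrightarrow> (\<lambda>f y. S1 f y + S2 f y) \<in> A"
    and T1: "T1 \<in> norm_closure A" and T2: "T2 \<in> norm_closure A"
  shows "(\<lambda>f y. T1 f y + T2 f y) \<in> norm_closure A"
proof -
  have T1b: "T1 \<in> bdd_op" and T2b: "T2 \<in> bdd_op" using T1 T2 closure_bdd by blast+
  show ?thesis unfolding norm_closure_def
  proof (intro CollectI conjI allI impI bdd_op_add T1b T2b)
    fix e :: real assume e: "e > 0"
    obtain S1 where S1: "S1 \<in> A" "opnorm (\<lambda>f. T1 f - S1 f) < e/2"
      using closureD[OF T1, of "e/2"] e by auto
    obtain S2 where S2: "S2 \<in> A" "opnorm (\<lambda>f. T2 f - S2 f) < e/2"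
      using closureD[OF T2, of "e/2"] e by auto
    have "(\<lambda>f. (\<lambda>y. T1 f y + T2 f y) - (\<lambda>y. S1 f y + S2 f y)) =
          (\<lambda>f y. (\<lambda>f. T1 f - S1 f) f y + (\<lambda>f. T2 f - S2 f) f y)"
      by (auto simp: fun_eq_iff)
    moreover have "opnorm (\<lambda>f y. (\<lambda>f. T1 f - S1 f) f y + (\<lambda>f. T2 f - S2 f) f y) \<le>
        opnorm (\<lambda>f. T1 f - S1 f) + opnorm (\<lambda>f. T2 f - S2 f)"
      by (rule opnorm_add; rule bdd_op_diff) (use T1b T2b S1 S2 A in auto)
    ultimately show "\<exists>S\<in>A. opnorm (\<lambda>f. (\<lambda>y. T1 f y + T2 f y) - S f) < e"
      using S1 S2 cl by (intro bexI[of _ "\<lambda>f y. S1 f y + S2 f y"]) auto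
  qed
qed

lemma closure_scale:
  assumes A: "A \<subseteq> bdd_op" and cl: "\<And>S. S \<in> A \<Longrightarrow> (\<lambda>f y. c * S f y) \<in> A"
    and T: "T \<in> norm_closure A"
  shows "(\<lambda>f y. c * T f y) \<in> norm_closure A"
proof -
  have Tb: "T \<in> bdd_op" using T closure_bdd by blast
  show ?thesis unfolding norm_closure_def
  proof (intro CollectI conjI allI impI bdd_op_scale Tb)
    fix e :: real assume e: "e > 0"
    have e': "e / (cmod c + 1) > 0" using e norm_ge_zero[of c] by (intro divide_pos_pos) linarith+
    obtain S where S: "S \<in> A" "opnorm (\<lambda>f. T f - S f) < e / (cmod c + 1)"
      using closureD[OF T e'] by auto
    have "(\<lambda>f. (\<lambda>y. c * T f y) - (\<lambda>y. c * S f y)) = (\<lambda>f y. c * (\<lambda>f. T f - S f) f y)"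
      by (auto simp: fun_eq_iff algebra_simps)
    moreover have "opnorm (\<lambda>f y. c * (\<lambda>f. T f - S f) f y) \<le> cmod c * opnorm (\<lambda>f. T f - S f)"
      by (rule opnorm_scale, rule bdd_op_diff) (use Tb S A in auto)
    moreover have "cmod c * opnorm (\<lambda>f. T f - S f) < e"
    proof -
      have "cmod c * opnorm (\<lambda>f. T f - S f) \<le> (cmod c + 1) * opnorm (\<lambda>f. T f - S f)"
        using opnorm_nonneg[OF bdd_op_diff[OF Tb, of S]] S A by (auto intro!: mult_right_mono)
      also have "\<dots> < (cmod c + 1) * (e / (cmod c + 1))"
        using S(2) norm_ge_zero[of c] by (intro mult_strict_left_mono) linarith+
      also have "\<dots> = e" using norm_ge_zero[of c] by (simp add: add_nonneg_eq_0_iff)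
      finally show ?thesis .
    qed
    ultimately show "\<exists>S\<in>A. opnorm (\<lambda>f. (\<lambda>y. c * T f y) - S f) < e"
      using S cl by (intro bexI[of _ "\<lambda>f y. c * S f y"]) auto
  qed
qed

lemma comp_diff_split:
  assumes S: "S \<in> bdd_op" and S': "S' \<in> bdd_op" and T: "T \<in> bdd_op" and T': "T' \<in> bdd_op"
  shows "(\<lambda>f. (S \<circ> T) f - (S' \<circ> T') f) =
    (\<lambda>f y. (S \<circ> (\<lambda>f. T f - T' f)) f y + ((\<lambda>f. S f - S' f) \<circ> T') f y)"
proof (rule ext)
  fix f
  show "(S \<circ> T) f - (S' \<circ> T') f = (\<lambda>y. (S \<circ> (\<lambda>f. T f - T' f)) f y + ((\<lambda>f. S f - S' f) \<circ> T') f y)"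
  proof (cases "f \<in> l2")
    case True
    have "S (T f - T' f) = (\<lambda>y. S (T f) y - S (T' f) y)"
      using bdd_op_diff_arg[OF S bdd_opD(1)[OF T True] bdd_opD(1)[OF T' True]]
      by (simp add: fun_diff_def)
    then show ?thesis by (auto simp: fun_eq_iff)
  next
    case False
    have z: "T f = (\<lambda>_. 0)" "T' f = (\<lambda>_. 0)" using bdd_opD(4)[OF T False] bdd_opD(4)[OF T' False] by auto
    have e: "T f - T' f = (\<lambda>_. 0)" unfolding z by (simp add: fun_diff_def)
    show ?thesis unfolding comp_def e unfolding z bdd_op_zero_arg[OF S] bdd_op_zero_arg[OF S']
      by (simp add: fun_diff_def)
  qed
qed

lemma closure_comp:
  assumes A: "A \<subseteq> bdd_op" and B: "B \<subseteq> bdd_op"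
    and cl: "\<And>T' S'. T' \<in> A \<Longrightarrow> S' \<in> B \<Longrightarrow> S' \<circ> T' \<in> C"
    and T: "T \<in> norm_closure A" and S: "S \<in> norm_closure B"
  shows "S \<circ> T \<in> norm_closure C"
proof -
  have Tb: "T \<in> bdd_op" and Sb: "S \<in> bdd_op" using T S closure_bdd by blast+
  show ?thesis unfolding norm_closure_def
  proof (intro CollectI conjI allI impI bdd_op_comp Tb Sb)
    fix e :: real assume e: "e > 0"
    define oS where "oS = opnorm S"
    define oT where "oT = opnorm T"
    have oS: "oS \<ge> 0" and oT: "oT \<ge> 0" using opnorm_nonneg Sb Tb oS_def oT_def by auto
    define d1 where "d1 = min 1 (e / (2 * (oS + 1)))"
    define d2 where "d2 = e / (2 * (oT + 2))"
    have d1: "d1 > 0" using e oS by (simp add: d1_def)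
    have d2: "d2 > 0" using e oT by (simp add: d2_def)
    obtain T' where T': "T' \<in> A" "opnorm (\<lambda>f. T f - T' f) < d1"
      using closureD[OF T d1] by auto
    obtain S' where S': "S' \<in> B" "opnorm (\<lambda>f. S f - S' f) < d2"
      using closureD[OF S d2] by auto
    have T'b: "T' \<in> bdd_op" and S'b: "S' \<in> bdd_op" using T' S' A B by auto
    have DT: "(\<lambda>f. T f - T' f) \<in> bdd_op" and DS: "(\<lambda>f. S f - S' f) \<in> bdd_op"
      using bdd_op_diff Tb T'b Sb S'b by auto
    have nDT: "opnorm (\<lambda>f. T f - T' f) \<ge> 0" and nDS: "opnorm (\<lambda>f. S f - S' f) \<ge> 0"
      using opnorm_nonneg DT DS by auto
    have oT': "opnorm T' \<le> oT + 1"
    proof -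
      have "opnorm (\<lambda>f. T' f - (\<lambda>f. \<lambda>_. 0) f) \<le> opnorm (\<lambda>f. T' f - T f) + opnorm (\<lambda>f. T f - (\<lambda>f. \<lambda>_. 0) f)"
        by (rule opnorm_tri[OF T'b Tb bdd_op_0])
      moreover have "(\<lambda>f. T' f - (\<lambda>f. \<lambda>_. 0) f) = T'" "(\<lambda>f. T f - (\<lambda>f. \<lambda>_. 0) f) = T"
        by (auto simp: fun_eq_iff)
      moreover have "opnorm (\<lambda>f. T' f - T f) \<le> opnorm (\<lambda>f. T f - T' f)" by (rule opnorm_sym[OF T'b Tb])
      moreover have "d1 \<le> 1" by (simp add: d1_def)
      ultimately show ?thesis using T'(2) oT_def by simp
    qed
    have "opnorm (\<lambda>f. (S \<circ> T) f - (S' \<circ> T') f) \<le>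
        opnorm (S \<circ> (\<lambda>f. T f - T' f)) + opnorm ((\<lambda>f. S f - S' f) \<circ> T')"
      unfolding comp_diff_split[OF Sb S'b Tb T'b]
      by (rule opnorm_add; rule bdd_op_comp) (use Sb DT DS T'b in auto)
    also have "\<dots> \<le> oS * opnorm (\<lambda>f. T f - T' f) + opnorm (\<lambda>f. S f - S' f) * opnorm T'"
      unfolding oS_def using opnorm_comp[OF DT Sb] opnorm_comp[OF T'b DS] by (rule add_mono)
    also have "\<dots> \<le> oS * d1 + d2 * (oT + 1)"
      using T'(2) S'(2) oT' nDS nDT oS opnorm_nonneg[OF T'b]
      by (intro add_mono mult_mono) auto
    also have "\<dots> < e"
    proof -
      have "oS * d1 \<le> oS * (e / (2 * (oS + 1)))" using oS by (intro mult_left_mono) (auto simp: d1_def)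
      also have "\<dots> < e / 2" using oS e by (simp add: field_simps)
      finally have a: "oS * d1 < e/2" .
      have "d2 * (oT + 1) < e / 2" using oT e by (simp add: d2_def field_simps)
      with a show ?thesis by linarith
    qed
    finally show "\<exists>R\<in>C. opnorm (\<lambda>f. (S \<circ> T) f - R f) < e"
      using cl[OF T'(1) S'(1)] by blast
  qed
qed

section \<open>Operators are determined by their entries\<close>

lemma delta_sum: "(\<Sum>i\<in>F. f i * delta i x) = (if x \<in> F then f x else 0)" if "finite F"
proof -
  have "(\<Sum>i\<in>F. f i * delta i x) = (\<Sum>i\<in>F. if x = i then f i else 0)"
    by (rule sum.cong) (auto simp: delta_def)
  also have "\<dots> = (if x \<in> F then f x else 0)" using that by (simp add: sum.delta)
  finally show ?thesis .
qed

lemma bdd_op_zero_entries: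
  assumes D: "D \<in> bdd_op" and z: "\<And>x. D (delta x) = (\<lambda>_. 0)"
  shows "D f = (\<lambda>_. 0)"
proof (cases "f \<in> l2")
  case False then show ?thesis using bdd_opD(4)[OF D] by simp
next
  case f: True
  have "D f z = 0" for z
  proof -
    have "cmod (D f z) \<le> 0 + e" if e: "e > 0" for e
    proof -
      have e': "e / (opnorm D + 1) > 0" using e opnorm_nonneg[OF D] by (intro divide_pos_pos) linarith+
      obtain F where F: "finite F" and tl: "l2norm (\<lambda>x. if x \<in> F then 0 else f x) < e / (opnorm D + 1)"
        using l2_approx[OF f e'] by blast
      define g where "g = (\<lambda>x. \<Sum>i\<in>F. f i * delta i x)"
      define t where "t = (\<lambda>x. if x \<in> F then 0 else f x)"
      have g: "g \<in> l2" unfolding g_def by (rule l2_sum) (use F in auto)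
      have fgt: "f = (\<lambda>x. g x + t x)" using F by (auto simp: g_def t_def delta_sum fun_eq_iff)
      have t: "t \<in> l2"
      proof -
        have "t = (\<lambda>x. f x - g x)" using fgt by (auto simp: fun_eq_iff)
        then show ?thesis using l2_diff[OF f g] by simp
      qed
      have Dg: "D g = (\<lambda>_. 0)" unfolding g_def
        using bdd_op_sum_arg[OF D F, of delta f] z by simp
      have "D f = (\<lambda>y. D g y + D t y)" using fgt bdd_op_add_arg[OF D g t] by metis
      then have "D f z = D t z" using Dg by simp
      then have "cmod (D f z) \<le> l2norm (D t)" using l2norm_ge[OF bdd_opD(1)[OF D t]] by simp
      also have "\<dots> \<le> opnorm D * l2norm t" by (rule opnorm_bound[OF D t])
      also have "\<dots> \<le> (opnorm D + 1) * (e / (opnorm D + 1))"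
        using tl opnorm_nonneg[OF D] l2norm_nonneg[of t] unfolding t_def
        by (intro mult_mono) auto
      also have "\<dots> = e" using opnorm_nonneg[OF D] by simp
      finally show ?thesis by simp
    qed
    then have "cmod (D f z) \<le> 0" by (rule field_le_epsilon)
    then show ?thesis by simp
  qed
  then show ?thesis by auto
qed

lemma bdd_op_eq_entries:
  assumes A: "A \<in> bdd_op" and B: "B \<in> bdd_op" and e: "\<And>x. A (delta x) = B (delta x)"
  shows "A = B"
proof
  fix f
  have "(\<lambda>f. A f - B f) f = (\<lambda>_. 0)"
    by (rule bdd_op_zero_entries[OF bdd_op_diff[OF A B]]) (use e in \<open>auto simp: fun_diff_def\<close>)
  then show "A f = B f" by (auto simp: fun_eq_iff)
qed

section \<open>Weighted partial matchings\<close>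

definition mop :: "('b \<Rightarrow> 'a option) \<Rightarrow> ('b \<Rightarrow> complex) \<Rightarrow> ('a \<Rightarrow> complex) \<Rightarrow> ('b \<Rightarrow> complex)" where
  "mop \<sigma> w f = (if f \<in> l2 then (\<lambda>z. case \<sigma> z of None \<Rightarrow> 0 | Some x \<Rightarrow> w z * f x) else (\<lambda>_. 0))"

lemma mop_delta: "mop \<sigma> w (delta x) z = (if \<sigma> z = Some x then w z else 0)"
  unfolding mop_def using l2_delta[of x] by (auto simp: delta_def split: option.splits)

lemma mop_bdd:
  fixes \<sigma> :: "'b \<Rightarrow> 'a option" and w :: "'b \<Rightarrow> complex"
  assumes inj: "\<And>z z' x. \<sigma> z = Some x \<Longrightarrow> \<sigma> z' = Some x \<Longrightarrow> z = z'"
    and w: "\<And>z. cmod (w z) \<le> M"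
  shows "mop \<sigma> w \<in> bdd_op"
proof -
  have M: "M \<ge> 0" using w[of undefined] norm_ge_zero[of "w undefined"] by linarith
  define h where "h f = (\<lambda>z. case \<sigma> z of None \<Rightarrow> 0 | Some x \<Rightarrow> w z * f x)" for f :: "'a \<Rightarrow> complex"
  define D where "D = {z. \<sigma> z \<noteq> None}"
  define s where "s z = the (\<sigma> z)" for z
  have injs: "inj_on s D"
  proof (rule inj_onI)
    fix z z' assume z: "z \<in> D" "z' \<in> D" "s z = s z'"
    then obtain x x' where "\<sigma> z = Some x" "\<sigma> z' = Some x'" by (auto simp: D_def)
    with z(3) show "z = z'" using inj by (simp add: s_def)
  qed
  have fin: "(\<Sum>z\<in>G. (cmod (h f z))^2) \<le> M^2 * (\<Sum>\<^sub>\<infinity>x. (cmod (f x))^2)"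
    if f: "f \<in> l2" and G: "finite G" for f G
  proof -
    have "(\<Sum>z\<in>G. (cmod (h f z))^2) \<le> (\<Sum>z\<in>G. if z \<in> D then M^2 * (cmod (f (s z)))^2 else 0)"
    proof (rule sum_mono)
      fix z assume "z \<in> G"
      show "(cmod (h f z))^2 \<le> (if z \<in> D then M^2 * (cmod (f (s z)))^2 else 0)"
      proof (cases "\<sigma> z")
        case None then show ?thesis by (simp add: h_def D_def)
      next
        case (Some x)
        have "cmod (w z * f x) \<le> M * cmod (f x)"
          using w[of z] by (simp add: norm_mult mult_right_mono)
        then have "(cmod (w z * f x))^2 \<le> (M * cmod (f x))^2" by (intro power_mono) auto
        then show ?thesis using Some by (simp add: h_def D_def s_def power_mult_distrib)
      qed
    qed
    also have "\<dots> = (\<Sum>z\<in>G \<inter> D. M^2 * (cmod (f (s z)))^2)"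
      using G by (simp add: sum.inter_restrict)
    also have "\<dots> = M^2 * (\<Sum>z\<in>G \<inter> D. (cmod (f (s z)))^2)" by (simp add: sum_distrib_left)
    also have "(\<Sum>z\<in>G \<inter> D. (cmod (f (s z)))^2) = (\<Sum>x\<in>s ` (G \<inter> D). (cmod (f x))^2)"
      by (rule sum.reindex[symmetric, unfolded comp_def]) (use injs in \<open>auto intro: inj_on_subset\<close>)
    also have "M^2 * \<dots> \<le> M^2 * (\<Sum>\<^sub>\<infinity>x. (cmod (f x))^2)"
      by (intro mult_left_mono l2_finsum_le f) (use G in auto)
    finally show ?thesis .
  qed
  have hl2: "h f \<in> l2" if f: "f \<in> l2" for f
  proof -
    have "bdd_above (sum (\<lambda>z. (cmod (h f z))^2) ` {G. G \<subseteq> UNIV \<and> finite G})"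
      by (rule bdd_aboveI) (auto intro: fin[OF f])
    then show ?thesis unfolding l2_def by (auto intro: nonneg_bdd_above_summable_on)
  qed
  have hn: "l2norm (h f) \<le> M * l2norm f" if f: "f \<in> l2" for f
  proof -
    have "(\<Sum>\<^sub>\<infinity>z. (cmod (h f z))^2) \<le> M^2 * (\<Sum>\<^sub>\<infinity>x. (cmod (f x))^2)"
      by (rule infsum_le_finite_sums) (use hl2[OF f] fin[OF f] in \<open>auto simp: l2_def\<close>)
    then have "l2norm (h f) \<le> sqrt (M^2 * (\<Sum>\<^sub>\<infinity>x. (cmod (f x))^2))"
      unfolding l2norm_def by (rule real_sqrt_le_mono)
    also have "\<dots> = M * l2norm f" using M by (simp add: l2norm_def real_sqrt_mult)
    finally show ?thesis .
  qed
  have mh: "mop \<sigma> w f = (if f \<in> l2 then h f else (\<lambda>_. 0))" for f by (simp add: mop_def h_def)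
  show ?thesis
  proof (rule bdd_opI[where C=M])
    fix f :: "'a \<Rightarrow> complex" assume f: "f \<in> l2"
    show "mop \<sigma> w f \<in> l2" using hl2[OF f] f by (simp add: mh)
    show "l2norm (mop \<sigma> w f) \<le> M * l2norm f" using hn[OF f] f by (simp add: mh)
  next
    fix f g :: "'a \<Rightarrow> complex" and a b assume f: "f \<in> l2" and g: "g \<in> l2"
    have fg: "(\<lambda>x. a * f x + b * g x) \<in> l2" by (rule l2_lin[OF f g])
    show "mop \<sigma> w (\<lambda>x. a * f x + b * g x) = (\<lambda>y. a * mop \<sigma> w f y + b * mop \<sigma> w g y)"
    proof (rule ext)
      fix z show "mop \<sigma> w (\<lambda>x. a * f x + b * g x) z = a * mop \<sigma> w f z + b * mop \<sigma> w g z"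
        using f g fg by (cases "\<sigma> z") (simp_all add: mh h_def algebra_simps)
    qed
  next
    fix f :: "'a \<Rightarrow> complex" assume "f \<notin> l2"
    then show "mop \<sigma> w f = (\<lambda>_. 0)" by (simp add: mop_def)
  qed
qed

section \<open>Greedy colouring\<close>

primrec gcol :: "('a::countable \<Rightarrow> 'a \<Rightarrow> bool) \<Rightarrow> nat \<Rightarrow> nat list" where
  "gcol R 0 = []"
| "gcol R (Suc n) = gcol R n @
     [LEAST k. \<forall>m<n. (\<exists>x y. to_nat x = n \<and> to_nat y = m \<and> R x y) \<longrightarrow> gcol R n ! m \<noteq> k]"

lemma gcol_length[simp]: "length (gcol R n) = n"
  by (induction n) auto

lemma gcol_stable: "m < n \<Longrightarrow> gcol R n ! m = gcol R (Suc m) ! m"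
proof (induction n)
  case 0 then show ?case by simp
next
  case (Suc n)
  show ?case
  proof (cases "m < n")
    case True then show ?thesis using Suc by (simp add: nth_append)
  next
    case False then have "m = n" using Suc by simp
    then show ?thesis by simp
  qed
qed

lemma gcol_last: "gcol R (Suc n) ! n =
   (LEAST k. \<forall>m<n. (\<exists>x y. to_nat x = n \<and> to_nat y = m \<and> R x y) \<longrightarrow> gcol R (Suc m) ! m \<noteq> k)"
proof -
  have "gcol R (Suc n) ! n =
   (LEAST k. \<forall>m<n. (\<exists>x y. to_nat x = n \<and> to_nat y = m \<and> R x y) \<longrightarrow> gcol R n ! m \<noteq> k)"
    by (simp add: nth_append)
  also have "\<dots> = (LEAST k. \<forall>m<n. (\<exists>x y. to_nat x = n \<and> to_nat y = m \<and> R x y) \<longrightarrow> gcol R (Suc m) ! m \<noteq> k)"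
    by (rule arg_cong[where f=Least], rule ext) (use gcol_stable[of _ n R] in auto)
  finally show ?thesis .
qed

lemma greedy_coloring:
  fixes R :: "'a::countable \<Rightarrow> 'a \<Rightarrow> bool"
  assumes sym: "\<And>x y. R x y \<Longrightarrow> R y x"
    and bd: "\<And>x. finite {y. R x y} \<and> card {y. R x y} \<le> N"
  shows "\<exists>c::'a \<Rightarrow> nat. (\<forall>x. c x \<le> N) \<and> (\<forall>x y. R x y \<and> x \<noteq> y \<longrightarrow> c x \<noteq> c y)"
proof -
  define cv where "cv n = gcol R (Suc n) ! n" for n
  define P where "P n m \<longleftrightarrow> (\<exists>x y. to_nat x = n \<and> to_nat y = m \<and> R x y)" for n m
  have cv: "cv n = (LEAST k. \<forall>m<n. P n m \<longrightarrow> cv m \<noteq> k)" for n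
    unfolding cv_def P_def by (rule gcol_last)
  have ex: "\<exists>k\<le>N. \<forall>m<n. P n m \<longrightarrow> cv m \<noteq> k" for n
  proof -
    define Bad where "Bad = {cv m | m. m < n \<and> P n m}"
    have fB: "finite Bad \<and> card Bad \<le> N"
    proof (cases "\<exists>x::'a. to_nat x = n")
      case False
      then have "\<not> P n m" for m unfolding P_def by blast
      then have "Bad = {}" unfolding Bad_def by blast
      then show ?thesis by simp
    next
      case True
      then obtain x :: 'a where x: "to_nat x = n" by blast
      have sub: "Bad \<subseteq> (\<lambda>y. cv (to_nat y)) ` {y. R x y}"
      proof
        fix c assume "c \<in> Bad"
        then obtain m x' y where c: "c = cv m" "to_nat x' = n" "to_nat y = m" "R x' y"
          unfolding Bad_def P_def by blast
        then have "x' = x" using x by (metis to_nat_split)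
        then show "c \<in> (\<lambda>y. cv (to_nat y)) ` {y. R x y}" using c by blast
      qed
      have "finite ((\<lambda>y. cv (to_nat y)) ` {y. R x y})" using bd[of x] by simp
      moreover have "card ((\<lambda>y. cv (to_nat y)) ` {y. R x y}) \<le> N"
        using bd[of x] card_image_le[of "{y. R x y}" "\<lambda>y. cv (to_nat y)"] by linarith
      ultimately show ?thesis using sub card_mono[OF _ sub] finite_subset[OF sub] by linarith
    qed
    have "\<not> {0..N} \<subseteq> Bad"
    proof
      assume "{0..N} \<subseteq> Bad"
      then have "card {0..N} \<le> card Bad" using fB by (intro card_mono) auto
      then show False using fB by simp
    qed
    then obtain k where k: "k \<le> N" "k \<notin> Bad" by (auto simp: subset_iff)
    have "\<forall>m<n. P n m \<longrightarrow> cv m \<noteq> k"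
    proof (intro allI impI)
      fix m assume "m < n" "P n m"
      then have "cv m \<in> Bad" unfolding Bad_def by blast
      then show "cv m \<noteq> k" using k(2) by auto
    qed
    then show ?thesis using k(1) by blast
  qed
  have cvN: "cv n \<le> N" for n
  proof -
    obtain k where k: "k \<le> N" "\<forall>m<n. P n m \<longrightarrow> cv m \<noteq> k" using ex by blast
    have "cv n \<le> k" unfolding cv[of n] by (rule Least_le) (use k in blast)
    then show ?thesis using k by simp
  qed
  have cvP: "\<forall>m<n. P n m \<longrightarrow> cv m \<noteq> cv n" for n
  proof -
    obtain k where k: "\<forall>m<n. P n m \<longrightarrow> cv m \<noteq> k" using ex by blast
    show ?thesis unfolding cv[of n] by (rule LeastI[of _ k]) (use k in blast)
  qed
  have "(\<forall>x. cv (to_nat x) \<le> N) \<and> (\<forall>x y. R x y \<and> x \<noteq> y \<longrightarrow> cv (to_nat x) \<noteq> cv (to_nat y))"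
  proof (intro conjI allI impI)
    fix x show "cv (to_nat x) \<le> N" by (rule cvN)
  next
    fix x y assume xy: "R x y \<and> x \<noteq> y"
    then have ne: "to_nat x \<noteq> to_nat y" by (simp only: to_nat_split not_False_eq_True)
    show "cv (to_nat x) \<noteq> cv (to_nat y)"
    proof (cases "to_nat y < to_nat x")
      case True
      have "P (to_nat x) (to_nat y)" unfolding P_def using xy by blast
      from cvP[of "to_nat x", rule_format, OF True this] show ?thesis by (rule not_sym)
    next
      case False
      then have lt: "to_nat x < to_nat y" using ne by linarith
      have "P (to_nat y) (to_nat x)" unfolding P_def using xy sym by blast
      from cvP[of "to_nat y", rule_format, OF lt this] show ?thesis .
    qed
  qed
  then show ?thesis by (rule exI[of _ "\<lambda>x. cv (to_nat x)"])
qed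

lemma is_metricD:
  assumes "is_metric d"
  shows "0 \<le> d x y" "d x x = 0" "d x y = d y x" "d x z \<le> d x y + d y z"
  using assms unfolding is_metric_def by blast+

lemma l2norm_delta: "l2norm (delta x) = 1"
proof -
  have "(\<Sum>\<^sub>\<infinity>y. (cmod (delta x y))^2) = (\<Sum>\<^sub>\<infinity>y\<in>{x}. (cmod (delta x y))^2)"
    by (rule infsum_cong_neutral) (auto simp: delta_def)
  then show ?thesis by (simp add: l2norm_def delta_def)
qed

section \<open>Finite propagation sets\<close>

lemma fpD: "finite_propagation \<rho> T \<Longrightarrow> \<exists>L. \<forall>x y. T (delta x) y \<noteq> 0 \<longrightarrow> \<rho> (Inl x) (Inr y) < L"
  unfolding finite_propagation_def entry_def by (meson not_le)

lemma fpI: "(\<And>x y. T (delta x) y \<noteq> 0 \<Longrightarrow> \<rho> (Inl x) (Inr y) < L) \<Longrightarrow> finite_propagation \<rho> T"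
  unfolding finite_propagation_def entry_def by (meson not_le)

lemma fp_add: assumes "finite_propagation \<rho> A" "finite_propagation \<rho> B"
  shows "finite_propagation \<rho> (\<lambda>f y. A f y + B f y)"
proof -
  obtain L1 where L1: "\<forall>x y. A (delta x) y \<noteq> 0 \<longrightarrow> \<rho> (Inl x) (Inr y) < L1" using fpD[OF assms(1)] by blast
  obtain L2 where L2: "\<forall>x y. B (delta x) y \<noteq> 0 \<longrightarrow> \<rho> (Inl x) (Inr y) < L2" using fpD[OF assms(2)] by blast
  show ?thesis
  proof (rule fpI[where L="max L1 L2"])
    fix x y assume "A (delta x) y + B (delta x) y \<noteq> 0"
    then have "A (delta x) y \<noteq> 0 \<or> B (delta x) y \<noteq> 0" by auto
    then show "\<rho> (Inl x) (Inr y) < max L1 L2" using L1 L2 by force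
  qed
qed

lemma fp_scale: assumes "finite_propagation \<rho> A"
  shows "finite_propagation \<rho> (\<lambda>f y. c * A f y)"
proof -
  obtain L1 where L1: "\<forall>x y. A (delta x) y \<noteq> 0 \<longrightarrow> \<rho> (Inl x) (Inr y) < L1" using fpD[OF assms(1)] by blast
  show ?thesis by (rule fpI[where L=L1]) (use L1 in auto)
qed

lemma fp_zero: "finite_propagation \<rho> (\<lambda>f. \<lambda>_. 0)"
  by (rule fpI[where L=0]) auto

lemma span_in_closure:
  fixes n :: nat
  assumes A: "A \<subseteq> bdd_op"
    and add: "\<And>S1 S2. S1 \<in> A \<Longrightarrow> S2 \<in> A \<Longrightarrow> (\<lambda>f y. S1 f y + S2 f y) \<in> A"
    and scale: "\<And>S c. S \<in> A \<Longrightarrow> (\<lambda>f y. c * S f y) \<in> A"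
    and zero: "(\<lambda>f. \<lambda>_. 0) \<in> A"
  shows "(\<And>i. i < n \<Longrightarrow> G i \<in> norm_closure A) \<Longrightarrow> (\<lambda>f y. \<Sum>i<n. c i * G i f y) \<in> norm_closure A"
proof (induction n)
  case 0
  then show ?case using closure_sub[OF A] zero by auto
next
  case (Suc n)
  have "(\<lambda>f y. \<Sum>i<Suc n. c i * G i f y) =
        (\<lambda>f y. (\<lambda>f y. \<Sum>i<n. c i * G i f y) f y + (\<lambda>f y. c n * G n f y) f y)"
    by simp
  also have "\<dots> \<in> norm_closure A"
    by (rule closure_add[OF A add], assumption, assumption)
       (use Suc closure_scale[OF A scale] in auto)
  finally show ?case .
qed

lemma span_bdd: fixes n :: nat shows "(\<And>i. i < n \<Longrightarrow> G i \<in> bdd_op) \<Longrightarrow> (\<lambda>f y. \<Sum>i<n. c i * G i f y) \<in> bdd_op"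
proof (induction n)
  case 0
  then show ?case using bdd_op_0 by simp
next
  case (Suc n)
  have "(\<lambda>f y. \<Sum>i<Suc n. c i * G i f y) =
        (\<lambda>f y. (\<lambda>f y. \<Sum>i<n. c i * G i f y) f y + (\<lambda>f y. c n * G n f y) f y)"
    by simp
  also have "\<dots> \<in> bdd_op" using Suc by (intro bdd_op_add bdd_op_scale) auto
  finally show ?case .
qed

lemma sum_divmod:
  fixes K a b :: nat and v :: complex
  assumes a: "a < K" and b: "b < K"
  shows "(\<Sum>k<K*K. if k div K = a \<and> k mod K = b then v else 0) = v"
proof -
  have iff: "(k div K = a \<and> k mod K = b) \<longleftrightarrow> k = a * K + b" for k
  proof
    assume "k div K = a \<and> k mod K = b"
    then show "k = a * K + b" using div_mult_mod_eq[of k K] by (simp add: mult.commute)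
  next
    assume "k = a * K + b"
    then show "k div K = a \<and> k mod K = b" using b by simp
  qed
  have lt: "a * K + b < K * K"
  proof -
    have "a * K + b < a * K + K" using b by simp
    also have "\<dots> = (a + 1) * K" by simp
    also have "\<dots> \<le> K * K" using a by (intro mult_right_mono) auto
    finally show ?thesis .
  qed
  have "(\<Sum>k<K*K. if k div K = a \<and> k mod K = b then v else 0) = (\<Sum>k<K*K. if k = a * K + b then v else 0)"
    by (rule sum.cong) (use iff in auto)
  also have "\<dots> = v" using lt by simp
  finally show ?thesis .
qed

locale three_spaces =
  fixes dX :: "'x::countable \<Rightarrow> 'x \<Rightarrow> real"
    and dY :: "'y::countable \<Rightarrow> 'y \<Rightarrow> real"
    and dZ :: "'z::countable \<Rightarrow> 'z \<Rightarrow> real"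
    and dXY :: "('x + 'y) \<Rightarrow> ('x + 'y) \<Rightarrow> real"
    and dYZ :: "('y + 'z) \<Rightarrow> ('y + 'z) \<Rightarrow> real"
  assumes bX: "bounded_geometry dX" and bY: "bounded_geometry dY" and bZ: "bounded_geometry dZ"
    and mXY: "dXY \<in> Dmetrics dX dY" and mYZ: "dYZ \<in> Dmetrics dY dZ"
begin

abbreviation "dXZ \<equiv> metric_comp dXY dYZ"

lemma XY: "is_metric dXY" "\<And>a b. dXY (Inl a) (Inl b) = dX a b" "\<And>a b. dXY (Inr a) (Inr b) = dY a b"
  using mXY unfolding Dmetrics_def by auto

lemma YZ: "is_metric dYZ" "\<And>a b. dYZ (Inl a) (Inl b) = dY a b" "\<And>a b. dYZ (Inr a) (Inr b) = dZ a b"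
  using mYZ unfolding Dmetrics_def by auto

lemma XZ_eq: "dXZ (Inl x) (Inr z) = (INF y. dXY (Inl x) (Inr y) + dYZ (Inl y) (Inr z))"
  by (simp add: metric_comp_def)

lemma XZ_bdd: "bdd_below (range (\<lambda>y. dXY (Inl x) (Inr y) + dYZ (Inl y) (Inr z)))"
  by (rule bdd_belowI[of _ 0]) (auto intro: add_nonneg_nonneg is_metricD(1)[OF XY(1)] is_metricD(1)[OF YZ(1)])

lemma XZ_less: "dXZ (Inl x) (Inr z) < L \<Longrightarrow> \<exists>y. dXY (Inl x) (Inr y) + dYZ (Inl y) (Inr z) < L"
  unfolding XZ_eq using cINF_less_iff[OF _ XZ_bdd] by auto

lemma XZ_le: "dXZ (Inl x) (Inr z) \<le> dXY (Inl x) (Inr y) + dYZ (Inl y) (Inr z)"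
  unfolding XZ_eq by (rule cINF_lower[OF XZ_bdd]) simp

lemma sepX_y:
  assumes "dXY (Inl x) (Inr y) < L" "dXY (Inl x') (Inr y) < L"
  shows "dX x x' < 2 * L"
proof -
  have "dX x x' = dXY (Inl x) (Inl x')" using XY by simp
  also have "\<dots> \<le> dXY (Inl x) (Inr y) + dXY (Inr y) (Inl x')" by (rule is_metricD(4)[OF XY(1)])
  also have "dXY (Inr y) (Inl x') = dXY (Inl x') (Inr y)" by (rule is_metricD(3)[OF XY(1)])
  finally show ?thesis using assms by linarith
qed

lemma sepZ_y:
  assumes "dYZ (Inl y) (Inr z) < L" "dYZ (Inl y) (Inr z') < L"
  shows "dZ z z' < 2 * L"
proof -
  have "dZ z z' = dYZ (Inr z) (Inr z')" using YZ by simp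
  also have "\<dots> \<le> dYZ (Inr z) (Inl y) + dYZ (Inl y) (Inr z')" by (rule is_metricD(4)[OF YZ(1)])
  also have "dYZ (Inr z) (Inl y) = dYZ (Inl y) (Inr z)" by (rule is_metricD(3)[OF YZ(1)])
  finally show ?thesis using assms by linarith
qed

lemma sepX:
  assumes "dXZ (Inl x) (Inr z) < L" "dXZ (Inl x') (Inr z) < L"
  shows "dX x x' < 2 * L"
proof -
  obtain y where y: "dXY (Inl x) (Inr y) + dYZ (Inl y) (Inr z) < L" using XZ_less[OF assms(1)] by blast
  obtain y' where y': "dXY (Inl x') (Inr y') + dYZ (Inl y') (Inr z) < L" using XZ_less[OF assms(2)] by blast
  have "dX x x' = dXY (Inl x) (Inl x')" using XY by simp
  also have "\<dots> \<le> dXY (Inl x) (Inr y) + dXY (Inr y) (Inl x')" by (rule is_metricD(4)[OF XY(1)])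
  also have "dXY (Inr y) (Inl x') \<le> dXY (Inr y) (Inr y') + dXY (Inr y') (Inl x')" by (rule is_metricD(4)[OF XY(1)])
  also have "dXY (Inr y) (Inr y') = dYZ (Inl y) (Inl y')" using XY YZ by simp
  also have "dYZ (Inl y) (Inl y') \<le> dYZ (Inl y) (Inr z) + dYZ (Inr z) (Inl y')" by (rule is_metricD(4)[OF YZ(1)])
  also have "dYZ (Inr z) (Inl y') = dYZ (Inl y') (Inr z)" by (rule is_metricD(3)[OF YZ(1)])
  also have "dXY (Inr y') (Inl x') = dXY (Inl x') (Inr y')" by (rule is_metricD(3)[OF XY(1)])
  finally show ?thesis using y y' by linarith
qed

lemma sepZ:
  assumes "dXZ (Inl x) (Inr z) < L" "dXZ (Inl x) (Inr z') < L"
  shows "dZ z z' < 2 * L"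
proof -
  obtain y where y: "dXY (Inl x) (Inr y) + dYZ (Inl y) (Inr z) < L" using XZ_less[OF assms(1)] by blast
  obtain y' where y': "dXY (Inl x) (Inr y') + dYZ (Inl y') (Inr z') < L" using XZ_less[OF assms(2)] by blast
  have "dZ z z' = dYZ (Inr z) (Inr z')" using YZ by simp
  also have "\<dots> \<le> dYZ (Inr z) (Inl y) + dYZ (Inl y) (Inr z')" by (rule is_metricD(4)[OF YZ(1)])
  also have "dYZ (Inl y) (Inr z') \<le> dYZ (Inl y) (Inl y') + dYZ (Inl y') (Inr z')" by (rule is_metricD(4)[OF YZ(1)])
  also have "dYZ (Inl y) (Inl y') = dXY (Inr y) (Inr y')" using XY YZ by simp
  also have "dXY (Inr y) (Inr y') \<le> dXY (Inr y) (Inl x) + dXY (Inl x) (Inr y')" by (rule is_metricD(4)[OF XY(1)])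
  also have "dXY (Inr y) (Inl x) = dXY (Inl x) (Inr y)" by (rule is_metricD(3)[OF XY(1)])
  also have "dYZ (Inr z) (Inl y) = dYZ (Inl y) (Inr z)" by (rule is_metricD(3)[OF YZ(1)])
  finally show ?thesis using y y' by linarith
qed

lemma finite_XY_ball: "finite {y. dXY (Inl x) (Inr y) < L}"
proof (cases "{y. dXY (Inl x) (Inr y) < L} = {}")
  case True then show ?thesis by simp
next
  case False
  then obtain y0 where y0: "dXY (Inl x) (Inr y0) < L" by auto
  have L: "2 * L > 0" using y0 is_metricD(1)[OF XY(1), of "Inl x" "Inr y0"] by linarith
  have "{y. dXY (Inl x) (Inr y) < L} \<subseteq> {y. dY y0 y \<le> 2 * L}"
  proof
    fix y assume y: "y \<in> {y. dXY (Inl x) (Inr y) < L}"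
    have "dY y0 y = dXY (Inr y0) (Inr y)" using XY by simp
    also have "\<dots> \<le> dXY (Inr y0) (Inl x) + dXY (Inl x) (Inr y)" by (rule is_metricD(4)[OF XY(1)])
    also have "dXY (Inr y0) (Inl x) = dXY (Inl x) (Inr y0)" by (rule is_metricD(3)[OF XY(1)])
    finally show "y \<in> {y. dY y0 y \<le> 2 * L}" using y y0 by simp
  qed
  moreover have "finite {y. dY y0 y \<le> 2 * L}" using bY L unfolding bounded_geometry_def by blast
  ultimately show ?thesis by (rule finite_subset)
qed

lemma coloring_X:
  assumes L: "L > 0"
  shows "\<exists>c::'x \<Rightarrow> nat. \<exists>N. (\<forall>x. c x \<le> N) \<and> (\<forall>x x'. dX x x' \<le> L \<and> x \<noteq> x' \<longrightarrow> c x \<noteq> c x')"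
proof -
  obtain N where N: "\<forall>x. finite {y. dX x y \<le> L} \<and> card {y. dX x y \<le> L} \<le> N"
    using bX L unfolding bounded_geometry_def by blast
  have "\<exists>c::'x \<Rightarrow> nat. (\<forall>x. c x \<le> N) \<and> (\<forall>x y. dX x y \<le> L \<and> x \<noteq> y \<longrightarrow> c x \<noteq> c y)"
    by (rule greedy_coloring) (use N is_metricD(3)[OF conjunct1[OF bX[unfolded bounded_geometry_def]]] in auto)
  then show ?thesis by blast
qed

lemma coloring_Z:
  assumes L: "L > 0"
  shows "\<exists>c::'z \<Rightarrow> nat. \<exists>N. (\<forall>x. c x \<le> N) \<and> (\<forall>x x'. dZ x x' \<le> L \<and> x \<noteq> x' \<longrightarrow> c x \<noteq> c x')"
proof -
  obtain N where N: "\<forall>x. finite {y. dZ x y \<le> L} \<and> card {y. dZ x y \<le> L} \<le> N"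
    using bZ L unfolding bounded_geometry_def by blast
  have "\<exists>c::'z \<Rightarrow> nat. (\<forall>x. c x \<le> N) \<and> (\<forall>x y. dZ x y \<le> L \<and> x \<noteq> y \<longrightarrow> c x \<noteq> c y)"
    by (rule greedy_coloring) (use N is_metricD(3)[OF conjunct1[OF bZ[unfolded bounded_geometry_def]]] in auto)
  then show ?thesis by blast
qed


lemma prod_fp:
  assumes T: "T \<in> bdd_op" "finite_propagation dXY T" and S: "S \<in> bdd_op" "finite_propagation dYZ S"
  shows "finite_propagation dXZ (S \<circ> T)"
proof -
  obtain L1 where L1: "\<forall>x y. T (delta x) y \<noteq> 0 \<longrightarrow> dXY (Inl x) (Inr y) < L1" using fpD[OF T(2)] by blast
  obtain L2 where L2: "\<forall>x y. S (delta x) y \<noteq> 0 \<longrightarrow> dYZ (Inl x) (Inr y) < L2" using fpD[OF S(2)] by blast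
  show ?thesis
  proof (rule fpI[where L="L1 + L2"], rule ccontr)
    fix x z assume ne: "(S \<circ> T) (delta x) z \<noteq> 0" and far: "\<not> dXZ (Inl x) (Inr z) < L1 + L2"
    define B where "B = {y. dXY (Inl x) (Inr y) < L1}"
    have B: "finite B" unfolding B_def by (rule finite_XY_ball)
    have Td: "T (delta x) = (\<lambda>w. \<Sum>y\<in>B. T (delta x) y * delta y w)"
    proof
      fix w show "T (delta x) w = (\<Sum>y\<in>B. T (delta x) y * delta y w)"
        using delta_sum[OF B, of "T (delta x)" w] L1 by (auto simp: B_def)
    qed
    have "S (T (delta x)) = (\<lambda>z. \<Sum>y\<in>B. T (delta x) y * S (delta y) z)"
      by (subst Td, rule bdd_op_sum_arg[OF S(1) B]) simp
    then have "(S \<circ> T) (delta x) z = (\<Sum>y\<in>B. T (delta x) y * S (delta y) z)" by simp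
    also have "\<dots> = 0"
    proof (rule sum.neutral, rule ballI)
      fix y assume y: "y \<in> B"
      show "T (delta x) y * S (delta y) z = 0"
      proof (rule ccontr)
        assume "T (delta x) y * S (delta y) z \<noteq> 0"
        then have "S (delta y) z \<noteq> 0" by auto
        then have "dYZ (Inl y) (Inr z) < L2" using L2 by blast
        moreover have "dXY (Inl x) (Inr y) < L1" using y by (simp add: B_def)
        ultimately have "dXZ (Inl x) (Inr z) < L1 + L2" using XZ_le[of x z y] by linarith
        then show False using far by simp
      qed
    qed
    finally show False using ne by simp
  qed
qed

lemma subset1: "op_tensor (Mprop dXY) (Mprop dYZ) \<subseteq> Mprop dXZ"
proof -
  let ?A = "{T \<in> bdd_op. finite_propagation dXZ T}"
  have A: "?A \<subseteq> bdd_op" by blast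
  have add: "\<And>S1 S2. S1 \<in> ?A \<Longrightarrow> S2 \<in> ?A \<Longrightarrow> (\<lambda>f y. S1 f y + S2 f y) \<in> ?A"
    by (auto intro: bdd_op_add fp_add)
  have scale: "\<And>S c. S \<in> ?A \<Longrightarrow> (\<lambda>f y. c * S f y) \<in> ?A"
    by (auto intro: bdd_op_scale fp_scale)
  have zero: "(\<lambda>f. \<lambda>_. 0) \<in> ?A" using bdd_op_0 fp_zero by blast
  have prods: "S \<circ> T \<in> norm_closure ?A" if "T \<in> Mprop dXY" "S \<in> Mprop dYZ" for S T
  proof -
    have T: "T \<in> norm_closure {T \<in> bdd_op. finite_propagation dXY T}" using that(1) by (simp add: Mprop_def)
    have S: "S \<in> norm_closure {T \<in> bdd_op. finite_propagation dYZ T}" using that(2) by (simp add: Mprop_def)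
    have cl: "S' \<circ> T' \<in> ?A" if "T' \<in> {T \<in> bdd_op. finite_propagation dXY T}"
      "S' \<in> {T \<in> bdd_op. finite_propagation dYZ T}" for T' S'
    proof -
      have "T' \<in> bdd_op" "finite_propagation dXY T'" "S' \<in> bdd_op" "finite_propagation dYZ S'"
        using that by auto
      then show ?thesis using bdd_op_comp prod_fp by blast
    qed
    show ?thesis by (rule closure_comp[OF _ _ cl T S]) auto
  qed
  have "op_cspan {S \<circ> T | S T. T \<in> Mprop dXY \<and> S \<in> Mprop dYZ} \<subseteq> norm_closure ?A"
  proof
    fix U assume U0: "U \<in> op_cspan {S \<circ> T | S T. T \<in> Mprop dXY \<and> S \<in> Mprop dYZ}"
    have "\<exists>(n::nat) c G. U = (\<lambda>f y. \<Sum>i<n. c i * G i f y) \<and>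
        (\<forall>i<n. G i \<in> {S \<circ> T | S T. T \<in> Mprop dXY \<and> S \<in> Mprop dYZ})"
      using U0 unfolding op_cspan_def by (simp only: mem_Collect_eq)
    then obtain n :: nat and c G where U: "U = (\<lambda>f y. \<Sum>i<n. c i * G i f y)"
      and G: "\<forall>i<n. G i \<in> {S \<circ> T | S T. T \<in> Mprop dXY \<and> S \<in> Mprop dYZ}"
      by (elim exE conjE)
    have Gi: "G i \<in> norm_closure ?A" if i: "i < n" for i
    proof -
      have "G i \<in> {S \<circ> T | S T. T \<in> Mprop dXY \<and> S \<in> Mprop dYZ}" using G i by simp
      then obtain S T where "G i = S \<circ> T" "T \<in> Mprop dXY" "S \<in> Mprop dYZ" by auto
      then show ?thesis using prods by simp
    qed
    show "U \<in> norm_closure ?A" unfolding U by (rule span_in_closure[OF A add scale zero Gi])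
  qed
  then have "op_tensor (Mprop dXY) (Mprop dYZ) \<subseteq> norm_closure (norm_closure ?A)"
    unfolding op_tensor_def by (rule closure_mono)
  also have "\<dots> \<subseteq> norm_closure ?A" by (rule closure_closure[OF A])
  finally show ?thesis unfolding Mprop_def .
qed


lemma decomp:
  assumes T: "T \<in> bdd_op" "finite_propagation dXZ T"
  shows "T \<in> op_cspan {S \<circ> V | S V. V \<in> Mprop dXY \<and> S \<in> Mprop dYZ}"
proof -
  obtain L0 where L0: "\<forall>x z. T (delta x) z \<noteq> 0 \<longrightarrow> dXZ (Inl x) (Inr z) < L0" using fpD[OF T(2)] by blast
  define L where "L = max L0 1"
  have Lpos: "L > 0" by (simp add: L_def)
  have LT: "dXZ (Inl x) (Inr z) < L" if "T (delta x) z \<noteq> 0" for x z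
    using L0 that by (force simp: L_def)
  have L2: "2 * L > 0" using Lpos by simp
  obtain cX :: "'x \<Rightarrow> nat" and NX where cXN: "\<forall>x. cX x \<le> NX"
    and cX: "\<forall>x x'. dX x x' \<le> 2 * L \<and> x \<noteq> x' \<longrightarrow> cX x \<noteq> cX x'"
    using coloring_X[OF L2] by blast
  obtain cZ :: "'z \<Rightarrow> nat" and NZ where cZN: "\<forall>x. cZ x \<le> NZ"
    and cZ: "\<forall>x x'. dZ x x' \<le> 2 * L \<and> x \<noteq> x' \<longrightarrow> cZ x \<noteq> cZ x'"
    using coloring_Z[OF L2] by blast
  define K where "K = NX + NZ + 1"
  have cXK: "cX x < K" for x using cXN[rule_format, of x] unfolding K_def by linarith
  have cZK: "cZ z < K" for z using cZN[rule_format, of z] unfolding K_def by linarith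
  define \<phi> where "\<phi> x z = (SOME y. dXY (Inl x) (Inr y) + dYZ (Inl y) (Inr z) < L)" for x z
  define P where "P i j x z \<longleftrightarrow> cX x = i \<and> cZ z = j \<and> dXZ (Inl x) (Inr z) < L" for i j x z
  have phi: "dXY (Inl x) (Inr (\<phi> x z)) < L \<and> dYZ (Inl (\<phi> x z)) (Inr z) < L" if "P i j x z" for i j x z
  proof -
    have ex: "\<exists>y. dXY (Inl x) (Inr y) + dYZ (Inl y) (Inr z) < L" using that XZ_less by (simp add: P_def)
    have "dXY (Inl x) (Inr (\<phi> x z)) + dYZ (Inl (\<phi> x z)) (Inr z) < L"
      unfolding \<phi>_def by (rule someI_ex[OF ex])
    moreover have "0 \<le> dXY (Inl x) (Inr (\<phi> x z))" "0 \<le> dYZ (Inl (\<phi> x z)) (Inr z)"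
      using is_metricD(1)[OF XY(1)] is_metricD(1)[OF YZ(1)] by auto
    ultimately show ?thesis by linarith
  qed
  have U1: "x = x'" if "P i j x z" "P i j x' z" for i j x x' z
  proof (rule ccontr)
    assume ne: "x \<noteq> x'"
    have "dX x x' < 2 * L" using that by (intro sepX) (auto simp: P_def)
    then have "cX x \<noteq> cX x'" using cX ne by auto
    then show False using that by (simp add: P_def)
  qed
  have U2: "z = z'" if "P i j x z" "P i j x z'" for i j x z z'
  proof (rule ccontr)
    assume ne: "z \<noteq> z'"
    have "dZ z z' < 2 * L" using that by (intro sepZ) (auto simp: P_def)
    then have "cZ z \<noteq> cZ z'" using cZ ne by auto
    then show False using that by (simp add: P_def)
  qed
  have U3: "x = x'" if "P i j x z" "P i j x' z'" "\<phi> x z = \<phi> x' z'" for i j x x' z z'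
  proof (rule ccontr)
    assume ne: "x \<noteq> x'"
    have "dX x x' < 2 * L" using phi[OF that(1)] phi[OF that(2)] that(3) by (intro sepX_y) auto
    then have "cX x \<noteq> cX x'" using cX ne by auto
    then show False using that by (simp add: P_def)
  qed

  define \<sigma>V where "\<sigma>V i j y = (if \<exists>p. P i j (fst p) (snd p) \<and> \<phi> (fst p) (snd p) = y
      then Some (fst (SOME p. P i j (fst p) (snd p) \<and> \<phi> (fst p) (snd p) = y)) else None)" for i j y
  define V where "V i j = mop (\<sigma>V i j) (\<lambda>_. 1)" for i j
  define xs where "xs i j z = (SOME x. P i j x z)" for i j z
  define \<sigma>S where "\<sigma>S i j z = (if \<exists>x. P i j x z then Some (\<phi> (xs i j z) z) else None)" for i j z
  define w where "w i j z = T (delta (xs i j z)) z" for i j z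
  define S where "S i j = mop (\<sigma>S i j) (w i j)" for i j

  have \<sigma>V_some: "\<exists>z. P i j x z \<and> \<phi> x z = y" if "\<sigma>V i j y = Some x" for i j x y
  proof -
    have ex: "\<exists>p. P i j (fst p) (snd p) \<and> \<phi> (fst p) (snd p) = y"
      using that by (auto simp: \<sigma>V_def split: if_splits)
    define p where "p = (SOME p. P i j (fst p) (snd p) \<and> \<phi> (fst p) (snd p) = y)"
    have p: "P i j (fst p) (snd p) \<and> \<phi> (fst p) (snd p) = y" unfolding p_def by (rule someI_ex[OF ex])
    have "x = fst p" using that ex by (simp add: \<sigma>V_def p_def)
    then show ?thesis using p by blast
  qed
  have \<sigma>V_at: "\<sigma>V i j (\<phi> x z) = Some x" if "P i j x z" for i j x z
  proof -
    have ex: "\<exists>p. P i j (fst p) (snd p) \<and> \<phi> (fst p) (snd p) = \<phi> x z"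
      using that by (intro exI[of _ "(x, z)"]) simp
    define p where "p = (SOME p. P i j (fst p) (snd p) \<and> \<phi> (fst p) (snd p) = \<phi> x z)"
    have p: "P i j (fst p) (snd p) \<and> \<phi> (fst p) (snd p) = \<phi> x z" unfolding p_def by (rule someI_ex[OF ex])
    have "fst p = x" using U3[of i j "fst p" "snd p" x z] p that by simp
    then show ?thesis using ex by (simp add: \<sigma>V_def p_def)
  qed
  have \<sigma>V_inj: "y = y'" if h: "\<sigma>V i j y = Some x" "\<sigma>V i j y' = Some x" for i j x y y'
  proof -
    obtain z where z: "P i j x z" "\<phi> x z = y" using \<sigma>V_some[OF h(1)] by blast
    obtain z' where z': "P i j x z'" "\<phi> x z' = y'" using \<sigma>V_some[OF h(2)] by blast
    have "z = z'" using U2[OF z(1) z'(1)] .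
    then show ?thesis using z z' by simp
  qed
  have xs: "xs i j z = x" if "P i j x z" for i j x z
  proof -
    have "P i j (xs i j z) z" unfolding xs_def by (rule someI[of _ x]) (rule that)
    then show ?thesis using U1 that by blast
  qed
  have \<sigma>S_some: "P i j (xs i j z) z \<and> y = \<phi> (xs i j z) z" if h: "\<sigma>S i j z = Some y" for i j z y
  proof -
    obtain x where x: "P i j x z" using h by (auto simp: \<sigma>S_def split: if_splits)
    then have "\<sigma>S i j z = Some (\<phi> (xs i j z) z)" by (auto simp: \<sigma>S_def)
    then show ?thesis using h xs[OF x] x by simp
  qed
  have \<sigma>S_at: "\<sigma>S i j z = Some (\<phi> x z)" if "P i j x z" for i j x z
    using that xs[OF that] by (auto simp: \<sigma>S_def)
  have \<sigma>S_inj: "z = z'" if "\<sigma>S i j z = Some y" "\<sigma>S i j z' = Some y" for i j y z z'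
  proof -
    have a: "P i j (xs i j z) z" "y = \<phi> (xs i j z) z" using \<sigma>S_some[OF that(1)] by auto
    have b: "P i j (xs i j z') z'" "y = \<phi> (xs i j z') z'" using \<sigma>S_some[OF that(2)] by auto
    have "xs i j z = xs i j z'" using U3[OF a(1) b(1)] a(2) b(2) by simp
    then show ?thesis using U2[OF a(1)] b(1) by simp
  qed
  have wb: "cmod (w i j z) \<le> opnorm T" for i j z
  proof -
    have "cmod (w i j z) \<le> l2norm (T (delta (xs i j z)))"
      unfolding w_def by (rule l2norm_ge[OF bdd_opD(1)[OF T(1) l2_delta]])
    also have "\<dots> \<le> opnorm T" by (rule opnorm_upper[OF T(1) l2_delta]) (simp add: l2norm_delta)
    finally show ?thesis .
  qed
  have Vb: "V i j \<in> bdd_op" for i j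
    unfolding V_def by (rule mop_bdd[where M=1]) (use \<sigma>V_inj in auto)
  have Sb: "S i j \<in> bdd_op" for i j
    unfolding S_def by (rule mop_bdd[where M="opnorm T"]) (use \<sigma>S_inj wb in auto)
  have Vfp: "finite_propagation dXY (V i j)" for i j
  proof (rule fpI[where L=L])
    fix x y assume "V i j (delta x) y \<noteq> 0"
    then have "\<sigma>V i j y = Some x" by (simp add: V_def mop_delta split: if_splits)
    then obtain z where "P i j x z" "\<phi> x z = y" using \<sigma>V_some by blast
    then show "dXY (Inl x) (Inr y) < L" using phi by blast
  qed
  have Sfp: "finite_propagation dYZ (S i j)" for i j
  proof (rule fpI[where L=L])
    fix y z assume "S i j (delta y) z \<noteq> 0"
    then have "\<sigma>S i j z = Some y" by (simp add: S_def mop_delta split: if_splits)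
    then have "P i j (xs i j z) z \<and> y = \<phi> (xs i j z) z" by (rule \<sigma>S_some)
    then show "dYZ (Inl y) (Inr z) < L" using phi by blast
  qed
  have VM: "V i j \<in> Mprop dXY" for i j
    unfolding Mprop_def using closure_sub[of "{T \<in> bdd_op. finite_propagation dXY T}"] Vb Vfp by blast
  have SM: "S i j \<in> Mprop dYZ" for i j
    unfolding Mprop_def using closure_sub[of "{T \<in> bdd_op. finite_propagation dYZ T}"] Sb Sfp by blast
  have entry: "(S i j \<circ> V i j) (delta x) z = (if P i j x z then T (delta x) z else 0)" for i j x z
  proof (cases "\<exists>z0. P i j x z0")
    case True
    then obtain z0 where z0: "P i j x z0" by blast
    have Vd: "V i j (delta x) = delta (\<phi> x z0)"
    proof
      fix y
      have "\<sigma>V i j y = Some x \<longleftrightarrow> y = \<phi> x z0"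
      proof
        assume "\<sigma>V i j y = Some x"
        then obtain z' where "P i j x z'" "\<phi> x z' = y" using \<sigma>V_some by blast
        then show "y = \<phi> x z0" using U2[OF z0] by blast
      next
        assume "y = \<phi> x z0"
        then show "\<sigma>V i j y = Some x" using \<sigma>V_at[OF z0] by simp
      qed
      then show "V i j (delta x) y = delta (\<phi> x z0) y"
        unfolding V_def mop_delta by (simp add: delta_def)
    qed
    have "(S i j \<circ> V i j) (delta x) z = (if \<sigma>S i j z = Some (\<phi> x z0) then w i j z else 0)"
      by (simp add: Vd S_def mop_delta)
    also have "\<dots> = (if P i j x z then T (delta x) z else 0)"
    proof (cases "P i j x z")
      case True
      then have "z = z0" using U2[OF True z0] by simp
      then show ?thesis using True \<sigma>S_at[OF True] xs[OF True] by (simp add: w_def)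
    next
      case False
      have "\<sigma>S i j z \<noteq> Some (\<phi> x z0)"
      proof
        assume "\<sigma>S i j z = Some (\<phi> x z0)"
        then have a: "P i j (xs i j z) z" "\<phi> x z0 = \<phi> (xs i j z) z" using \<sigma>S_some by auto
        have "xs i j z = x" using U3[OF a(1) z0] a(2) by simp
        then show False using a(1) False by simp
      qed
      then show ?thesis using False by simp
    qed
    finally show ?thesis .
  next
    case False
    have Vd: "V i j (delta x) = (\<lambda>_. 0)"
    proof
      fix y
      have "\<sigma>V i j y \<noteq> Some x" using \<sigma>V_some False by blast
      then show "V i j (delta x) y = 0" by (simp add: V_def mop_delta)
    qed
    show ?thesis using False by (simp add: Vd bdd_op_zero_arg[OF Sb])
  qed
  have entry': "S i j (V i j (delta x)) z = (if P i j x z then T (delta x) z else 0)" for i j x z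
    using entry[of i j x z] by simp
  define G where "G k = S (k div K) (k mod K) \<circ> V (k div K) (k mod K)" for k
  define Op where "Op = (\<lambda>f y. \<Sum>k<K*K. (\<lambda>_. 1) k * G k f y)"
  have Opb: "Op \<in> bdd_op" unfolding Op_def
    by (rule span_bdd) (unfold G_def, rule bdd_op_comp[OF Vb Sb])
  have "T = Op"
  proof (rule bdd_op_eq_entries[OF T(1) Opb])
    fix x show "T (delta x) = Op (delta x)"
    proof
      fix z
      have "Op (delta x) z = (\<Sum>k<K*K. if k div K = cX x \<and> k mod K = cZ z then
             (if dXZ (Inl x) (Inr z) < L then T (delta x) z else 0) else 0)"
        unfolding Op_def G_def by (rule sum.cong) (auto simp: entry' P_def)
      also have "\<dots> = (if dXZ (Inl x) (Inr z) < L then T (delta x) z else 0)"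
        by (rule sum_divmod[OF cXK cZK])
      also have "\<dots> = T (delta x) z" using LT by auto
      finally show "T (delta x) z = Op (delta x) z" by simp
    qed
  qed
  moreover have "Op \<in> op_cspan {S \<circ> V | S V. V \<in> Mprop dXY \<and> S \<in> Mprop dYZ}"
  proof -
    have "\<forall>k<K*K. G k \<in> {S \<circ> V | S V. V \<in> Mprop dXY \<and> S \<in> Mprop dYZ}"
      unfolding G_def using VM SM by blast
    then show ?thesis unfolding op_cspan_def Op_def mem_Collect_eq
      by (intro exI[of _ "K*K"] exI[of _ "\<lambda>_. (1::complex)"] exI[of _ G] conjI refl)
  qed
  ultimately show ?thesis by simp
qed

lemma subset2: "Mprop dXZ \<subseteq> op_tensor (Mprop dXY) (Mprop dYZ)"
  unfolding Mprop_def[of dXZ] op_tensor_def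
  by (rule closure_mono) (use decomp in blast)

end


theorem mainTheorem7:
  fixes dX :: "'x::countable \<Rightarrow> 'x \<Rightarrow> real"
    and dY :: "'y::countable \<Rightarrow> 'y \<Rightarrow> real"
    and dZ :: "'z::countable \<Rightarrow> 'z \<Rightarrow> real"
    and dXY :: "('x + 'y) \<Rightarrow> ('x + 'y) \<Rightarrow> real"
    and dYZ :: "('y + 'z) \<Rightarrow> ('y + 'z) \<Rightarrow> real"
  assumes "bounded_geometry dX" and "bounded_geometry dY" and "bounded_geometry dZ"
    and "dXY \<in> Dmetrics dX dY" and "dYZ \<in> Dmetrics dY dZ"
  shows "op_tensor (Mprop dXY) (Mprop dYZ) = Mprop (metric_comp dXY dYZ)"
proof -
  interpret three_spaces dX dY dZ dXY dYZ
    using assms by unfold_locales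
  show ?thesis using subset1 subset2 by (rule equalityI)
qed

end
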